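(* Let $\xi$ and $\eta$ be jointly stationary and ergodic random measures on $\mathbb{R}^d$, where $\eta$ is discrete with locally finite support, and let $\eta^*$ be the simple point process with the same support as $\eta$. Assume $\lambda_\xi,\lambda_\eta,\lambda_{\eta^*}\in(0,\infty)$. Let $\alpha\in(0,\lambda_\xi\lambda_\eta^{-1}]$ and let $\tau$ be an allocation with appetite $\alpha$ with respect to $(\xi,\eta)$. Then $\tau$ is $\alpha$-balanced, i.e. almost surely $$\eta\big(\{x\in\mathbb{R}^d:\xi(C^\tau(x))\ne\alpha\,\eta(\{x\})\}\big)=0,$$ and moreover $\lambda_\xi\,\mathbb{P}_\xi(\tau(0)\neq\infty)=\alpha\lambda_\eta$.
   Context: Framework: $(\Omega,\mathcal{F},\mathbb{P})$ is a probability space with a measurable flow $(\theta_x)_{x\in\mathbb{R}^d}$ ($(\omega,x)\mapsto\theta_x\omega$ measurable, $\theta_0=\mathrm{id}$, $\theta_x\circ\theta_y=\theta_{x+y}$), $\mathbb{P}$ stationary ($\mathbb{P}\circ\theta_x=\mathbb{P}$) and ergodic (flow-invariant events have probability 0 or 1). A random measure is a kernel $\xi$ from $\Omega$ to $\mathcal{B}(\mathbb{R}^d)$, a.s. locally finite; it is stationary if $\xi(\theta_x\omega,C-x)=\xi(\omega,C)$ for all Borel $C$, all $x$, a.e. $\omega$; "jointly stationary and ergodic" means all measures involved are stationary in this sense on such a space. Intensity: $\lambda_\xi:=\mathbb{E}\,\xi([0,1]^d)$. Palm probability of a stationary $\xi$ with $0<\lambda_\xi<\infty$: $\mathbb{P}_\xi(A):=\lambda_\xi^{-1}\lambda_d(B)^{-1}\mathbb{E}\int\mathbf{1}_B(x)\mathbf{1}_A(\theta_x)\,\xi(dx)$,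 $A\in\mathcal{F}$, for any Borel $B$ with $0<\lambda_d(B)<\infty$ ($\lambda_d$ = Lebesgue measure; independent of $B$). An allocation is a measurable $\tau:\Omega\times\mathbb{R}^d\to\mathbb{R}^d\cup\{\infty\}$ with $\tau(\theta_y\omega,x-y)=\tau(\omega,x)-y$ for all $x,y$, a.e. $\omega$. Write $C^\tau(z):=\{y\in\mathbb{R}^d:\tau(y)=z\}$ and $x\in\eta^*$ if $\eta^*(\{x\})>0$. An allocation $\tau$ has appetite $\alpha>0$ w.r.t. $(\xi,\eta)$ if: (i) a.s. $\xi(\{z:\tau(z)\notin \mathrm{supp}(\eta^* )\cup\{\infty\}\})=0$; (ii) a.s. $\eta^*(\{x:\xi(C^\tau(x))>\alpha\eta(\{x\})\})=0$; (iii) the event that both $\xi(\{z:\tau(z)=\infty\})>0$ and $\eta^*(\{x:\xi(C^\tau(x))<\alpha\eta(\{x\})\})>0$ has probability zero. *)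

theory Defs
  imports "HOL-Probability.Probability"
begin

text \<open>The point at infinity
  used by allocations is modelled by None in 'd option.\<close>

definition measurable_flow :: "'a measure \<Rightarrow> ('d::euclidean_space \<Rightarrow> 'a \<Rightarrow> 'a) \<Rightarrow> bool" where
  "measurable_flow M \<theta> \<longleftrightarrow>
     (\<lambda>(\<omega>, x). \<theta> x \<omega>) \<in> (M \<Otimes>\<^sub>M borel) \<rightarrow>\<^sub>M M \<and>
     (\<forall>\<omega>\<in>space M. \<theta> 0 \<omega> = \<omega>) \<and>
     (\<forall>x y. \<forall>\<omega>\<in>space M. \<theta> x (\<theta> y \<omega>) = \<theta> (x + y) \<omega>)"

definition stationary_flow :: "'a measure \<Rightarrow> ('d::euclidean_space \<Rightarrow> 'a \<Rightarrow> 'a) \<Rightarrow> bool" where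
  "stationary_flow M \<theta> \<longleftrightarrow> (\<forall>x. distr M M (\<theta> x) = M)"

definition ergodic_flow :: "'a measure \<Rightarrow> ('d::euclidean_space \<Rightarrow> 'a \<Rightarrow> 'a) \<Rightarrow> bool" where
  "ergodic_flow M \<theta> \<longleftrightarrow>
     (\<forall>A\<in>sets M. (\<forall>x. \<theta> x -` A \<inter> space M = A) \<longrightarrow> measure M A = 0 \<or> measure M A = 1)"

definition random_measure :: "'a measure \<Rightarrow> ('a \<Rightarrow> 'd::euclidean_space measure) \<Rightarrow> bool" where
  "random_measure M \<xi> \<longleftrightarrow>
     (\<forall>\<omega>\<in>space M. sets (\<xi> \<omega>) = sets borel) \<and>
     (\<forall>C\<in>sets borel. (\<lambda>\<omega>. emeasure (\<xi> \<omega>) C) \<in> borel_measurable M) \<and>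
     (AE \<omega> in M. \<forall>C. bounded C \<longrightarrow> emeasure (\<xi> \<omega>) C < \<infinity>)"

definition stationary_rm ::
  "'a measure \<Rightarrow> ('d::euclidean_space \<Rightarrow> 'a \<Rightarrow> 'a) \<Rightarrow> ('a \<Rightarrow> 'd measure) \<Rightarrow> bool" where
  "stationary_rm M \<theta> \<xi> \<longleftrightarrow>
     (AE \<omega> in M. \<forall>x. \<forall>C\<in>sets borel.
        emeasure (\<xi> (\<theta> x \<omega>)) ((\<lambda>c. c - x) ` C) = emeasure (\<xi> \<omega>) C)"

definition intensity :: "'a measure \<Rightarrow> ('a \<Rightarrow> 'd::euclidean_space measure) \<Rightarrow> ennreal" where
  "intensity M \<xi> = (\<integral>\<^sup>+ \<omega>. emeasure (\<xi> \<omega>) (cbox 0 One) \<partial>M)"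

text \<open>Atoms of eta (= support of eta when eta is discrete with locally finite support).\<close>
definition atoms :: "('a \<Rightarrow> 'd::euclidean_space measure) \<Rightarrow> 'a \<Rightarrow> 'd set" where
  "atoms \<eta> \<omega> = {x. emeasure (\<eta> \<omega>) {x} > 0}"

definition discrete_locally_finite :: "'a measure \<Rightarrow> ('a \<Rightarrow> 'd::euclidean_space measure) \<Rightarrow> bool" where
  "discrete_locally_finite M \<eta> \<longleftrightarrow>
     (AE \<omega> in M. (\<forall>B. bounded B \<longrightarrow> finite (B \<inter> atoms \<eta> \<omega>)) \<and>
                 emeasure (\<eta> \<omega>) (UNIV - atoms \<eta> \<omega>) = 0)"

definition eta_star :: "('a \<Rightarrow> 'd::euclidean_space measure) \<Rightarrow> 'a \<Rightarrow> 'd set \<Rightarrow> ennreal" where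
  "eta_star \<eta> \<omega> C = emeasure (count_space UNIV) (C \<inter> atoms \<eta> \<omega>)"

definition intensity_star :: "'a measure \<Rightarrow> ('a \<Rightarrow> 'd::euclidean_space measure) \<Rightarrow> ennreal" where
  "intensity_star M \<eta> = (\<integral>\<^sup>+ \<omega>. eta_star \<eta> \<omega> (cbox 0 One) \<partial>M)"

definition allocation ::
  "'a measure \<Rightarrow> ('d::euclidean_space \<Rightarrow> 'a \<Rightarrow> 'a) \<Rightarrow> ('a \<Rightarrow> 'd \<Rightarrow> 'd option) \<Rightarrow> bool" where
  "allocation M \<theta> \<tau> \<longleftrightarrow>
     {p \<in> space (M \<Otimes>\<^sub>M borel). \<tau> (fst p) (snd p) = None} \<in> sets (M \<Otimes>\<^sub>M borel) \<and>
     (\<forall>C\<in>sets borel. {p \<in> space (M \<Otimes>\<^sub>M borel). \<exists>y\<in>C. \<tau> (fst p) (snd p) = Some y}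
                        \<in> sets (M \<Otimes>\<^sub>M borel)) \<and>
     (AE \<omega> in M. \<forall>x y. \<tau> (\<theta> y \<omega>) (x - y) = map_option (\<lambda>z. z - y) (\<tau> \<omega> x))"

definition cell :: "('a \<Rightarrow> 'd \<Rightarrow> 'd option) \<Rightarrow> 'a \<Rightarrow> 'd \<Rightarrow> 'd set" where
  "cell \<tau> \<omega> z = {y. \<tau> \<omega> y = Some z}"

definition null_in :: "'d measure \<Rightarrow> 'd set \<Rightarrow> bool" where
  "null_in \<mu> A \<longleftrightarrow> (\<exists>N\<in>null_sets \<mu>. A \<subseteq> N)"

definition appetite ::
  "'a measure \<Rightarrow> ('a \<Rightarrow> 'd::euclidean_space measure) \<Rightarrow> ('a \<Rightarrow> 'd measure)
     \<Rightarrow> ('a \<Rightarrow> 'd \<Rightarrow> 'd option) \<Rightarrow> real \<Rightarrow> bool" where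
  "appetite M \<xi> \<eta> \<tau> \<alpha> \<longleftrightarrow>
     (AE \<omega> in M. null_in (\<xi> \<omega>) {z. \<exists>y. \<tau> \<omega> z = Some y \<and> y \<notin> atoms \<eta> \<omega>}) \<and>
     (AE \<omega> in M. eta_star \<eta> \<omega>
        {x. emeasure (\<xi> \<omega>) (cell \<tau> \<omega> x) > ennreal \<alpha> * emeasure (\<eta> \<omega>) {x}} = 0) \<and>
     (AE \<omega> in M. \<not> (\<not> null_in (\<xi> \<omega>) {z. \<tau> \<omega> z = None} \<and>
        eta_star \<eta> \<omega> {x. emeasure (\<xi> \<omega>) (cell \<tau> \<omega> x) < ennreal \<alpha> * emeasure (\<eta> \<omega>) {x}} > 0))"

definition alpha_balanced ::
  "'a measure \<Rightarrow> ('a \<Rightarrow> 'd::euclidean_space measure) \<Rightarrow> ('a \<Rightarrow> 'd measure)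
     \<Rightarrow> ('a \<Rightarrow> 'd \<Rightarrow> 'd option) \<Rightarrow> real \<Rightarrow> bool" where
  "alpha_balanced M \<xi> \<eta> \<tau> \<alpha> \<longleftrightarrow>
     (AE \<omega> in M. null_in (\<eta> \<omega>)
        {x. emeasure (\<xi> \<omega>) (cell \<tau> \<omega> x) \<noteq> ennreal \<alpha> * emeasure (\<eta> \<omega>) {x}})"

text \<open>Palm probability of xi, with the window B = [0,1]^d (Lebesgue measure 1).\<close>
definition palm ::
  "'a measure \<Rightarrow> ('d::euclidean_space \<Rightarrow> 'a \<Rightarrow> 'a) \<Rightarrow> ('a \<Rightarrow> 'd measure) \<Rightarrow> 'a set \<Rightarrow> ennreal" where
  "palm M \<theta> \<xi> A =
     (\<integral>\<^sup>+ \<omega>. (\<integral>\<^sup>+ x. indicator (cbox 0 One) x * indicator A (\<theta> x \<omega>) \<partial>(\<xi> \<omega>)) \<partial>M)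
       / intensity M \<xi>"

end

theory Submission
  imports Defs
begin
locale flowS =
  fixes M :: "'a measure" and \<theta> :: "'d::euclidean_space \<Rightarrow> 'a \<Rightarrow> 'a"
  assumes prob: "prob_space M" and flow: "measurable_flow M \<theta>" and stat: "stationary_flow M \<theta>"
begin

lemma pair_meas: "(\<lambda>(\<omega>, x). \<theta> x \<omega>) \<in> (M \<Otimes>\<^sub>M borel) \<rightarrow>\<^sub>M M"
  using flow unfolding measurable_flow_def by auto

lemma theta_meas[measurable]: "\<theta> z \<in> M \<rightarrow>\<^sub>M M"
proof -
  have "(\<lambda>\<omega>. (\<lambda>(\<omega>, x). \<theta> x \<omega>) (\<omega>, z)) \<in> M \<rightarrow>\<^sub>M M"
    by (rule measurable_compose[OF _ pair_meas]) measurable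
  then show ?thesis by simp
qed

lemma theta_space: "\<omega> \<in> space M \<Longrightarrow> \<theta> z \<omega> \<in> space M"
  using measurable_space[OF theta_meas] .

lemma theta_add: "\<omega> \<in> space M \<Longrightarrow> \<theta> x (\<theta> y \<omega>) = \<theta> (x + y) \<omega>"
  using flow unfolding measurable_flow_def by auto

lemma theta_0: "\<omega> \<in> space M \<Longrightarrow> \<theta> 0 \<omega> = \<omega>"
  using flow unfolding measurable_flow_def by auto

lemma distr_theta: "distr M M (\<theta> z) = M"
  using stat unfolding stationary_flow_def by auto

lemma nn_shift: "f \<in> borel_measurable M \<Longrightarrow> (\<integral>\<^sup>+\<omega>. f (\<theta> z \<omega>) \<partial>M) = (\<integral>\<^sup>+\<omega>. f \<omega> \<partial>M)"
  by (subst nn_integral_distr[symmetric, of "\<theta> z" M], auto simp: distr_theta)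

lemma AE_shift:
  assumes "AE \<omega> in M. P \<omega>" shows "AE \<omega> in M. P (\<theta> z \<omega>)"
proof -
  obtain N where N: "N \<in> sets M" "emeasure M N = 0" "{\<omega>\<in>space M. \<not> P \<omega>} \<subseteq> N"
    using assms unfolding eventually_ae_filter by auto
  have "emeasure M (\<theta> z -` N \<inter> space M) = emeasure (distr M M (\<theta> z)) N"
    using N by (simp add: emeasure_distr)
  also have "\<dots> = 0" using N by (simp add: distr_theta)
  finally show ?thesis
    apply (intro AE_I[of _ _ "\<theta> z -` N \<inter> space M"])
    using N theta_space by auto
qed

lemma nn_shift_AE:
  assumes "g \<in> borel_measurable M" "AE \<omega> in M. f \<omega> = g \<omega>"
  shows "(\<integral>\<^sup>+\<omega>. f (\<theta> z \<omega>) \<partial>M) = (\<integral>\<^sup>+\<omega>. f \<omega> \<partial>M)"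
proof -
  have "(\<integral>\<^sup>+\<omega>. f (\<theta> z \<omega>) \<partial>M) = (\<integral>\<^sup>+\<omega>. g (\<theta> z \<omega>) \<partial>M)"
    by (rule nn_integral_cong_AE) (use AE_shift[OF assms(2)] in auto)
  also have "\<dots> = (\<integral>\<^sup>+\<omega>. g \<omega> \<partial>M)" by (rule nn_shift[OF assms(1)])
  also have "\<dots> = (\<integral>\<^sup>+\<omega>. f \<omega> \<partial>M)"
    by (rule nn_integral_cong_AE) (use assms(2) in auto)
  finally show ?thesis .
qed

end

locale rmS = flowS M \<theta> for M :: "'a measure" and \<theta> :: "'d::euclidean_space \<Rightarrow> 'a \<Rightarrow> 'a" +
  fixes \<mu> :: "'a \<Rightarrow> 'd measure"
  assumes rm: "random_measure M \<mu>" and srm: "stationary_rm M \<theta> \<mu>"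
begin

lemma sets_mu: "\<omega> \<in> space M \<Longrightarrow> sets (\<mu> \<omega>) = sets borel"
  using rm unfolding random_measure_def by auto

lemma space_mu: "\<omega> \<in> space M \<Longrightarrow> space (\<mu> \<omega>) = UNIV"
  using sets_eq_imp_space_eq[OF sets_mu] by auto

lemma meas_C[measurable]: "C \<in> sets borel \<Longrightarrow> (\<lambda>\<omega>. emeasure (\<mu> \<omega>) C) \<in> borel_measurable M"
  using rm unfolding random_measure_def by auto

lemma AE_lf: "AE \<omega> in M. \<forall>C. bounded C \<longrightarrow> emeasure (\<mu> \<omega>) C < \<infinity>"
  using rm unfolding random_measure_def by auto

lemma borel_shift[measurable]: "D \<in> sets borel \<Longrightarrow> {x. x - z \<in> D} \<in> sets (borel :: 'd measure)"
proof -
  assume D: "D \<in> sets borel"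
  have "(\<lambda>x. x - z) -` D \<inter> space borel \<in> sets borel"
    by (rule measurable_sets[OF _ D]) simp
  then show ?thesis by (simp add: vimage_def)
qed

lemma img_shift: "(\<lambda>c. c - z) ` {x. x - z \<in> D} = (D::'d set)"
proof (rule set_eqI)
  fix d show "d \<in> (\<lambda>c. c - z) ` {x. x - z \<in> D} \<longleftrightarrow> d \<in> D"
  proof
    assume "d \<in> D" then show "d \<in> (\<lambda>c. c - z) ` {x. x - z \<in> D}"
      by (intro image_eqI[of _ _ "d + z"]) auto
  qed auto
qed

lemma shift_eq: "AE \<omega> in M. \<forall>z. \<forall>D\<in>sets borel. emeasure (\<mu> (\<theta> z \<omega>)) D = emeasure (\<mu> \<omega>) {x. x - z \<in> D}"
  using srm unfolding stationary_rm_def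
proof (rule AE_mp, intro AE_I2 impI allI ballI)
  fix \<omega> z and D :: "'d set" assume H: "\<forall>x. \<forall>C\<in>sets borel. emeasure (\<mu> (\<theta> x \<omega>)) ((\<lambda>c. c - x) ` C) = emeasure (\<mu> \<omega>) C"
    and D: "D \<in> sets borel"
  from H[rule_format, OF borel_shift[OF D, of z], of z] show "emeasure (\<mu> (\<theta> z \<omega>)) D = emeasure (\<mu> \<omega>) {x. x - z \<in> D}"
    by (simp only: img_shift)
qed

lemma E_shift:
  assumes "D \<in> sets borel"
  shows "(\<integral>\<^sup>+\<omega>. emeasure (\<mu> \<omega>) {x. x - z \<in> D} \<partial>M) = (\<integral>\<^sup>+\<omega>. emeasure (\<mu> \<omega>) D \<partial>M)"
proof -
  have "(\<integral>\<^sup>+\<omega>. emeasure (\<mu> \<omega>) {x. x - z \<in> D} \<partial>M) = (\<integral>\<^sup>+\<omega>. emeasure (\<mu> (\<theta> z \<omega>)) D \<partial>M)"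
    by (rule nn_integral_cong_AE) (use shift_eq assms in auto)
  also have "\<dots> = (\<integral>\<^sup>+\<omega>. emeasure (\<mu> \<omega>) D \<partial>M)"
    by (rule nn_shift) (use assms in measurable)
  finally show ?thesis .
qed

definition G0 where "G0 = {\<omega>\<in>space M. \<forall>n::nat. emeasure (\<mu> \<omega>) (ball 0 (real n)) < \<infinity>}"

lemma G0_sets[measurable]: "G0 \<in> sets M"
  unfolding G0_def by measurable

lemma AE_G0: "AE \<omega> in M. \<omega> \<in> G0"
  using AE_lf by (rule AE_mp) (auto intro!: AE_I2 simp: G0_def)

definition K where "K W \<omega> = density (density (\<mu> \<omega>) (indicator W)) (\<lambda>_. inverse (1 + emeasure (\<mu> \<omega>) W))"

lemma emeasure_K: "\<omega> \<in> space M \<Longrightarrow> W \<in> sets borel \<Longrightarrow> A \<in> sets borel \<Longrightarrow>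
   emeasure (K W \<omega>) A = inverse (1 + emeasure (\<mu> \<omega>) W) * emeasure (\<mu> \<omega>) (W \<inter> A)"
  unfolding K_def using sets_mu
  by (subst emeasure_density_const) (auto simp: emeasure_restricted)

lemma K_meas: assumes W: "W \<in> sets borel" shows "K W \<in> M \<rightarrow>\<^sub>M subprob_algebra borel"
proof (rule measurable_subprob_algebra)
  fix \<omega> assume \<omega>: "\<omega> \<in> space M"
  have sp: "space (K W \<omega>) = UNIV" unfolding K_def using space_mu[OF \<omega>] by simp
  have "emeasure (K W \<omega>) UNIV = inverse (1 + emeasure (\<mu> \<omega>) W) * emeasure (\<mu> \<omega>) W"
    using emeasure_K[OF \<omega> W, of UNIV] by simp
  also have "\<dots> \<le> 1"
  proof (cases "emeasure (\<mu> \<omega>) W")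
    case (real r)
    have r: "r \<ge> 0" using real by auto
    have e1: "1 + ennreal r = ennreal (1 + r)" using r by simp
    have "inverse (1 + ennreal r) * ennreal r = ennreal (inverse (1 + r) * r)"
    proof -
      have "inverse (ennreal (1+r)) = ennreal (inverse (1+r))" by (rule inverse_ennreal) (use r in simp)
      then show ?thesis unfolding e1 using r by (simp add: ennreal_mult'')
    qed
    also have "\<dots> \<le> 1" using r by (simp add: field_simps)
    finally show ?thesis using real by simp
  qed simp
  finally show "subprob_space (K W \<omega>)" by (intro subprob_spaceI) (auto simp: sp)
  show "sets (K W \<omega>) = sets borel" unfolding K_def using sets_mu[OF \<omega>] by simp
next
  fix A :: "'d set" assume A: "A \<in> sets borel"
  have m: "(\<lambda>\<omega>. inverse (1 + emeasure (\<mu> \<omega>) W) * emeasure (\<mu> \<omega>) (W \<inter> A)) \<in> borel_measurable M"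
  proof -
    note [measurable] = W A
    show ?thesis by measurable
  qed
  show "(\<lambda>\<omega>. emeasure (K W \<omega>) A) \<in> borel_measurable M"
    by (rule measurable_cong[THEN iffD1, OF _ m]) (rule emeasure_K[OF _ W A, symmetric])
qed


lemma sec_borel: "A \<in> sets (M \<Otimes>\<^sub>M borel) \<Longrightarrow> {x. (\<omega>, x) \<in> A} \<in> sets (borel :: 'd measure)"
  using sets_Pair1[of A M borel \<omega>] by (simp add: vimage_def)

lemma cinv: "c \<noteq> 0 \<Longrightarrow> c \<noteq> \<top> \<Longrightarrow> (c::ennreal) * (inverse c * x) = x"
  by (metis divide_ennreal_def ennreal_mult_divide_eq ennreal_times_divide mult.commute)

lemma meas_sec_ball:
  assumes A: "A \<in> sets (M \<Otimes>\<^sub>M borel)"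
  shows "(\<lambda>\<omega>. indicator G0 \<omega> * emeasure (\<mu> \<omega>) ({x. (\<omega>, x) \<in> A} \<inter> ball 0 (real n))) \<in> borel_measurable M"
proof -
  define W :: "'d set" where "W = ball 0 (real n)"
  have W: "W \<in> sets borel" unfolding W_def by simp
  have sig: "Sigma (space M) (\<lambda>\<omega>. {x. (\<omega>, x) \<in> A}) = A"
    using sets.sets_into_space[OF A] by (auto simp: space_pair_measure)
  have h: "(\<lambda>\<omega>. emeasure (K W \<omega>) {x. (\<omega>, x) \<in> A}) \<in> borel_measurable M"
    by (rule emeasure_measurable_subprob_algebra2[OF _ K_meas[OF W]]) (simp add: sig A)
  have m: "(\<lambda>\<omega>. indicator G0 \<omega> * (1 + emeasure (\<mu> \<omega>) W) * emeasure (K W \<omega>) {x. (\<omega>, x) \<in> A}) \<in> borel_measurable M"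
  proof -
    note [measurable] = W h
    show ?thesis by measurable
  qed
  show ?thesis
  proof (rule measurable_cong[THEN iffD1, OF _ m])
    fix \<omega> assume \<omega>: "\<omega> \<in> space M"
    show "indicator G0 \<omega> * (1 + emeasure (\<mu> \<omega>) W) * emeasure (K W \<omega>) {x. (\<omega>, x) \<in> A} =
       indicator G0 \<omega> * emeasure (\<mu> \<omega>) ({x. (\<omega>, x) \<in> A} \<inter> ball 0 (real n))"
    proof (cases "\<omega> \<in> G0")
      case True
      then have f: "emeasure (\<mu> \<omega>) W < \<infinity>" unfolding G0_def W_def by auto
      have "(1 + emeasure (\<mu> \<omega>) W) * emeasure (K W \<omega>) {x. (\<omega>, x) \<in> A}
           = (1 + emeasure (\<mu> \<omega>) W) * (inverse (1 + emeasure (\<mu> \<omega>) W) * emeasure (\<mu> \<omega>) (W \<inter> {x. (\<omega>, x) \<in> A}))"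
        by (simp add: emeasure_K[OF \<omega> W sec_borel[OF A]])
      also have "\<dots> = emeasure (\<mu> \<omega>) (W \<inter> {x. (\<omega>, x) \<in> A})"
        by (rule cinv) (use f in auto)
      finally show ?thesis using True by (simp add: W_def Int_commute mult.assoc)
    qed simp
  qed
qed

lemma meas_sec:
  assumes A: "A \<in> sets (M \<Otimes>\<^sub>M borel)"
  shows "(\<lambda>\<omega>. indicator G0 \<omega> * emeasure (\<mu> \<omega>) {x. (\<omega>, x) \<in> A}) \<in> borel_measurable M"
proof -
  have m: "(\<lambda>\<omega>. \<Squnion>n. indicator G0 \<omega> * emeasure (\<mu> \<omega>) ({x. (\<omega>, x) \<in> A} \<inter> ball 0 (real n))) \<in> borel_measurable M"
    by (intro borel_measurable_SUP meas_sec_ball[OF A]) simp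
  show ?thesis
  proof (rule measurable_cong[THEN iffD1, OF _ m])
    fix \<omega> assume \<omega>: "\<omega> \<in> space M"
    have "(\<Squnion>n. emeasure (\<mu> \<omega>) ({x. (\<omega>, x) \<in> A} \<inter> ball 0 (real n))) = emeasure (\<mu> \<omega>) (\<Union>n. {x. (\<omega>, x) \<in> A} \<inter> ball 0 (real n))"
      by (rule SUP_emeasure_incseq) (auto simp: sets_mu[OF \<omega>] sec_borel[OF A] incseq_def)
    also have "(\<Union>n. {x. (\<omega>, x) \<in> A} \<inter> ball 0 (real n)) = {x. (\<omega>, x) \<in> A}"
    proof -
      have "\<exists>n::nat. x \<in> ball 0 (real n)" for x :: 'd
      proof -
        obtain n :: nat where "norm x < real n" using reals_Archimedean2 by blast
        then show ?thesis by (auto simp: dist_norm)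
      qed
      then show ?thesis by blast
    qed
    finally show "(\<Squnion>n. indicator G0 \<omega> * emeasure (\<mu> \<omega>) ({x. (\<omega>, x) \<in> A} \<inter> ball 0 (real n))) =
         indicator G0 \<omega> * emeasure (\<mu> \<omega>) {x. (\<omega>, x) \<in> A}"
      by (simp add: SUP_mult_left_ennreal[symmetric])
  qed
qed

lemma AE_G0_eq: "AE \<omega> in M. indicator G0 \<omega> * f \<omega> = (f \<omega> :: ennreal)"
  using AE_G0 by eventually_elim simp

end

definition Qc :: "'d::euclidean_space set" where "Qc = {x. \<forall>i\<in>Basis. 0 \<le> x \<bullet> i \<and> x \<bullet> i < 1}"

lemma Qc_borel[measurable]: "Qc \<in> sets borel"
  unfolding Qc_def by measurable

lemma suminf_const_ennreal: "(c::ennreal) \<noteq> 0 \<Longrightarrow> (\<Sum>m::nat. c) = \<infinity>"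
proof -
  assume c: "c \<noteq> 0"
  have "(\<Sum>m::nat. c) = (\<integral>\<^sup>+ m. c \<partial>count_space (UNIV::nat set))" using nn_integral_count_space_nat[of "\<lambda>_. c"] by (simp only:)
  also have "\<dots> = c * emeasure (count_space (UNIV::nat set)) UNIV" by (simp only: nn_integral_const space_count_space)
  also have "\<dots> = \<infinity>" using c by (simp add: ennreal_mult_eq_top_iff)
  finally show ?thesis .
qed

context rmS begin

lemma face_null:
  assumes fin: "(\<integral>\<^sup>+\<omega>. emeasure (\<mu> \<omega>) (cbox 0 One) \<partial>M) < \<infinity>" and i: "i \<in> Basis"
  shows "(\<integral>\<^sup>+\<omega>. emeasure (\<mu> \<omega>) {x \<in> cbox 0 One. x \<bullet> i = 1} \<partial>M) = 0"
proof (rule ccontr)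
  define F :: "'d set" where "F = {x \<in> cbox 0 One. x \<bullet> i = 1}"
  have F[measurable]: "F \<in> sets borel" unfolding F_def by measurable
  define t :: "nat \<Rightarrow> real" where "t m = inverse (real m + 1)" for m
  define T where "T m = {x. x - (- t m *\<^sub>R i) \<in> F}" for m
  have T[measurable]: "T m \<in> sets borel" for m unfolding T_def by (rule borel_shift[OF F])
  assume ne: "(\<integral>\<^sup>+\<omega>. emeasure (\<mu> \<omega>) {x \<in> cbox 0 One. x \<bullet> i = 1} \<partial>M) \<noteq> 0"
  have ET: "(\<integral>\<^sup>+\<omega>. emeasure (\<mu> \<omega>) (T m) \<partial>M) = (\<integral>\<^sup>+\<omega>. emeasure (\<mu> \<omega>) F \<partial>M)" for m
    unfolding T_def by (rule E_shift[OF F])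
  have t01: "0 < t m" "t m \<le> 1" for m unfolding t_def by (auto simp: field_simps)
  have Tsub: "T m \<subseteq> cbox 0 One" for m
  proof
    fix x assume "x \<in> T m"
    then have x: "x + t m *\<^sub>R i \<in> cbox 0 One" "(x + t m *\<^sub>R i) \<bullet> i = 1" unfolding T_def F_def by auto
    show "x \<in> cbox 0 One" unfolding mem_box(2)
    proof
      fix j :: 'd assume j: "j \<in> Basis"
      show "0 \<bullet> j \<le> x \<bullet> j \<and> x \<bullet> j \<le> One \<bullet> j"
      proof (cases "j = i")
        case True
        then show ?thesis using x(2) t01[of m] i by (simp add: inner_add_left)
      next
        case False
        then have "(x + t m *\<^sub>R i) \<bullet> j = x \<bullet> j" using i j by (simp add: inner_add_left inner_Basis)
        then show ?thesis using x(1) j unfolding mem_box(2) by metis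
      qed
    qed
  qed
  have Ti: "x \<in> T m \<Longrightarrow> x \<bullet> i = 1 - t m" for x m
    unfolding T_def F_def using i by (auto simp: inner_add_left)
  have inj: "t m = t n \<Longrightarrow> m = n" for m n unfolding t_def by auto
  have disj: "disjoint_family T"
  proof (unfold disjoint_family_on_def, intro ballI impI)
    fix m n :: nat assume "m \<noteq> n"
    then have "t m \<noteq> t n" using inj by metis
    then show "T m \<inter> T n = {}" using Ti[of _ m] Ti[of _ n] by force
  qed
  have "(\<Sum>m. (\<integral>\<^sup>+\<omega>. emeasure (\<mu> \<omega>) (T m) \<partial>M)) = (\<integral>\<^sup>+\<omega>. (\<Sum>m. emeasure (\<mu> \<omega>) (T m)) \<partial>M)"
    by (rule nn_integral_suminf[symmetric]) measurable
  also have "\<dots> = (\<integral>\<^sup>+\<omega>. emeasure (\<mu> \<omega>) (\<Union>m. T m) \<partial>M)"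
    by (rule nn_integral_cong, rule suminf_emeasure) (auto simp: sets_mu disj)
  also have "\<dots> \<le> (\<integral>\<^sup>+\<omega>. emeasure (\<mu> \<omega>) (cbox 0 One) \<partial>M)"
    by (rule nn_integral_mono, rule emeasure_mono) (use Tsub in \<open>auto simp: sets_mu\<close>)
  also have "\<dots> < \<infinity>" by (rule fin)
  finally have "(\<Sum>m. (\<integral>\<^sup>+\<omega>. emeasure (\<mu> \<omega>) (T m) \<partial>M)) < \<infinity>" .
  moreover have "(\<Sum>m. (\<integral>\<^sup>+\<omega>. emeasure (\<mu> \<omega>) (T m) \<partial>M)) = \<infinity>"
    unfolding ET by (rule suminf_const_ennreal) (use ne in \<open>simp add: F_def\<close>)
  ultimately show False by simp
qed

lemma boundary_null:
  assumes fin: "(\<integral>\<^sup>+\<omega>. emeasure (\<mu> \<omega>) (cbox 0 One) \<partial>M) < \<infinity>"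
  shows "AE \<omega> in M. emeasure (\<mu> \<omega>) (cbox 0 One - Qc) = 0"
proof -
  have sub: "cbox (0::'d) One - Qc \<subseteq> (\<Union>i\<in>Basis. {x \<in> cbox 0 One. x \<bullet> i = (1::real)})"
  proof (rule subsetI)
    fix x :: 'd assume x: "x \<in> cbox 0 One - Qc"
    then obtain i where i: "i \<in> Basis" "\<not> (0 \<le> x \<bullet> i \<and> x \<bullet> i < 1)" unfolding Qc_def by auto
    have "0 \<le> x \<bullet> i" "x \<bullet> i \<le> 1" using x i(1) by (auto simp: mem_box)
    then have "x \<bullet> i = 1" using i by simp
    then show "x \<in> (\<Union>i\<in>Basis. {x \<in> cbox 0 One. x \<bullet> i = (1::real)})" using i(1) x by blast
  qed
  have "(\<integral>\<^sup>+\<omega>. emeasure (\<mu> \<omega>) (cbox 0 One - Qc) \<partial>M)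
      \<le> (\<integral>\<^sup>+\<omega>. (\<Sum>i\<in>Basis. emeasure (\<mu> \<omega>) {x \<in> cbox 0 One. x \<bullet> i = 1}) \<partial>M)"
  proof (rule nn_integral_mono)
    fix \<omega> assume \<omega>: "\<omega> \<in> space M"
    have "emeasure (\<mu> \<omega>) (cbox 0 One - Qc) \<le> emeasure (\<mu> \<omega>) (\<Union>i\<in>Basis. {x \<in> cbox 0 One. x \<bullet> i = 1})"
      by (rule emeasure_mono[OF sub]) (auto simp: sets_mu[OF \<omega>])
    also have "\<dots> \<le> (\<Sum>i\<in>Basis. emeasure (\<mu> \<omega>) {x \<in> cbox 0 One. x \<bullet> i = 1})"
      by (rule emeasure_subadditive_finite) (auto simp: sets_mu[OF \<omega>])
    finally show "emeasure (\<mu> \<omega>) (cbox 0 One - Qc) \<le> (\<Sum>i\<in>Basis. emeasure (\<mu> \<omega>) {x \<in> cbox 0 One. x \<bullet> i = 1})" .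
  qed
  also have "\<dots> = (\<Sum>i\<in>Basis. (\<integral>\<^sup>+\<omega>. emeasure (\<mu> \<omega>) {x \<in> cbox 0 One. x \<bullet> i = 1} \<partial>M))"
    by (rule nn_integral_sum) measurable
  also have "\<dots> = 0" using face_null[OF fin] by simp
  finally have "(\<integral>\<^sup>+\<omega>. emeasure (\<mu> \<omega>) (cbox 0 One - Qc) \<partial>M) = 0" by simp
  then show ?thesis by (subst (asm) nn_integral_0_iff_AE) measurable
qed

end

definition Lat :: "'d::euclidean_space set" where "Lat = {k. \<forall>i\<in>Basis. k \<bullet> i \<in> \<int>}"
definition tile :: "'d::euclidean_space \<Rightarrow> 'd set" where "tile k = {x. x - k \<in> Qc}"

lemma borel_shift_g: "D \<in> sets borel \<Longrightarrow> {x. x - z \<in> D} \<in> sets (borel :: 'd::euclidean_space measure)"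
proof -
  assume D: "D \<in> sets borel"
  have "(\<lambda>x. x - z) -` D \<inter> space borel \<in> sets borel"
    by (rule measurable_sets[OF _ D]) simp
  then show ?thesis by (simp add: vimage_def)
qed

lemma tile_borel[measurable]: "tile k \<in> sets borel"
  unfolding tile_def by (rule borel_shift_g) simp

lemma Lat_countable: "countable (Lat :: 'd::euclidean_space set)"
proof -
  have sub: "(Lat::'d set) \<subseteq> (\<lambda>f. \<Sum>i\<in>Basis. f i *\<^sub>R i) ` (PiE Basis (\<lambda>_. \<int>))"
  proof
    fix k :: 'd assume k: "k \<in> Lat"
    have e: "(\<Sum>i\<in>Basis. restrict (\<lambda>i. k \<bullet> i) Basis i *\<^sub>R i) = k"
    proof -
      have "(\<Sum>i\<in>Basis. restrict (\<lambda>i. k \<bullet> i) Basis i *\<^sub>R i) = (\<Sum>i\<in>Basis. (k \<bullet> i) *\<^sub>R i)"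
        by (rule sum.cong) auto
      then show ?thesis by (simp add: euclidean_representation)
    qed
    have m: "restrict (\<lambda>i. k \<bullet> i) Basis \<in> PiE Basis (\<lambda>_. \<int>)"
      using k unfolding Lat_def by (simp add: PiE_iff)
    show "k \<in> (\<lambda>f. \<Sum>i\<in>Basis. f i *\<^sub>R i) ` (PiE Basis (\<lambda>_. \<int>))"
      using image_eqI[where f="\<lambda>f. \<Sum>i\<in>Basis. f i *\<^sub>R i", OF e[symmetric] m] .
  qed
  have c: "countable (PiE (Basis::'d set) (\<lambda>_. (\<int>::real set)))"
    by (rule countable_PiE) (simp_all add: countable_int)
  show ?thesis by (rule countable_subset[OF sub countable_image[OF c]])
qed

lemma Lat_uminus: "k \<in> Lat \<Longrightarrow> - k \<in> Lat"
  unfolding Lat_def by (auto simp: inner_minus_left)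

lemma Lat_add: "k \<in> Lat \<Longrightarrow> k' \<in> Lat \<Longrightarrow> k + k' \<in> Lat"
  unfolding Lat_def by (auto simp: inner_add_left)

lemma Lat_0: "0 \<in> Lat"
  unfolding Lat_def by auto

lemma tile_0: "tile 0 = Qc"
  unfolding tile_def by simp

lemma tile_shift: "{x. x - z \<in> tile k} = tile (k + z)"
  unfolding tile_def by (simp add: algebra_simps)

lemma tile_cover: "\<exists>k\<in>Lat. (x::'d::euclidean_space) \<in> tile k"
proof -
  define k :: 'd where "k = (\<Sum>i\<in>Basis. of_int \<lfloor>x \<bullet> i\<rfloor> *\<^sub>R i)"
  have ki: "k \<bullet> i = of_int \<lfloor>x \<bullet> i\<rfloor>" if "i \<in> Basis" for i
    using that unfolding k_def by (simp add: inner_sum_left inner_Basis if_distrib cong: if_cong)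
  have "k \<in> Lat" unfolding Lat_def using ki by auto
  moreover have "x \<in> tile k" unfolding tile_def Qc_def
    using ki by (auto simp: inner_diff_left) linarith+
  ultimately show ?thesis by blast
qed

lemma tile_unique: "(k::'d::euclidean_space) \<in> Lat \<Longrightarrow> k' \<in> Lat \<Longrightarrow> x \<in> tile k \<Longrightarrow> x \<in> tile k' \<Longrightarrow> k = k'"
proof (rule euclidean_eqI)
  fix i :: 'd assume k: "k \<in> Lat" and k': "k' \<in> Lat" and x: "x \<in> tile k" "x \<in> tile k'" and i: "i \<in> Basis"
  obtain a where a: "k \<bullet> i = of_int a" using k i unfolding Lat_def by (auto elim: Ints_cases)
  obtain b where b: "k' \<bullet> i = of_int b" using k' i unfolding Lat_def by (auto elim: Ints_cases)
  have "0 \<le> x \<bullet> i - of_int a" "x \<bullet> i - of_int a < 1" "0 \<le> x \<bullet> i - of_int b" "x \<bullet> i - of_int b < 1"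
    using x i a b unfolding tile_def Qc_def by (auto simp: inner_diff_left)
  then have "a = b" by linarith
  then show "k \<bullet> i = k' \<bullet> i" using a b by simp
qed

lemma tile_disj: "disjoint_family_on tile Lat"
  unfolding disjoint_family_on_def using tile_unique by blast

lemma tile_bounded: "bounded (tile k)"
proof -
  have "tile k \<subseteq> cbox k (k + One)"
    unfolding tile_def Qc_def by (auto simp: mem_box inner_diff_left inner_add_left) (metis less_eq_real_def diff_less_eq add.commute)
  then show ?thesis by (metis bounded_cbox bounded_subset)
qed

locale mainS = flowS M \<theta> for M :: "'a measure" and \<theta> :: "'d::euclidean_space \<Rightarrow> 'a \<Rightarrow> 'a" +
  fixes \<xi> \<eta> :: "'a \<Rightarrow> 'd measure" and \<tau> :: "'a \<Rightarrow> 'd \<Rightarrow> 'd option" and \<alpha> :: real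
  assumes rmx: "random_measure M \<xi>" and srx: "stationary_rm M \<theta> \<xi>"
    and rme: "random_measure M \<eta>" and sre: "stationary_rm M \<theta> \<eta>"
    and dlf: "discrete_locally_finite M \<eta>"
    and alloc: "allocation M \<theta> \<tau>" and app: "appetite M \<xi> \<eta> \<tau> \<alpha>"
    and erg: "ergodic_flow M \<theta>"
begin

sublocale xi: rmS M \<theta> \<xi> by unfold_locales (rule rmx, rule srx)
sublocale eta: rmS M \<theta> \<eta> by unfold_locales (rule rme, rule sre)

lemma tgt_sets: "C \<in> sets borel \<Longrightarrow> {p \<in> space (M \<Otimes>\<^sub>M borel). \<exists>y\<in>C. \<tau> (fst p) (snd p) = Some y} \<in> sets (M \<Otimes>\<^sub>M borel)"
  using alloc unfolding allocation_def by auto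

lemma none_sets: "{p \<in> space (M \<Otimes>\<^sub>M borel). \<tau> (fst p) (snd p) = None} \<in> sets (M \<Otimes>\<^sub>M borel)"
  using alloc unfolding allocation_def by auto

lemma cov: "AE \<omega> in M. \<forall>x y. \<tau> (\<theta> y \<omega>) (x - y) = map_option (\<lambda>z. z - y) (\<tau> \<omega> x)"
  using alloc unfolding allocation_def by auto

lemma cov0: "\<forall>x y. \<tau> (\<theta> y \<omega>) (x - y) = map_option (\<lambda>z. z - y) (\<tau> \<omega> x) \<Longrightarrow>
   \<tau> (\<theta> z \<omega>) x = map_option (\<lambda>w. w - z) (\<tau> \<omega> (x + z))"
  by (metis add_diff_cancel)

lemma snd_sets: "B \<in> sets borel \<Longrightarrow> {p \<in> space (M \<Otimes>\<^sub>M borel). snd p \<in> B} \<in> sets (M \<Otimes>\<^sub>M borel)"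
proof -
  assume B: "B \<in> sets borel"
  have "snd -` B \<inter> space (M \<Otimes>\<^sub>M borel) \<in> sets (M \<Otimes>\<^sub>M borel)"
    by (rule measurable_sets[OF measurable_snd]) (simp add: B)
  moreover have "snd -` B \<inter> space (M \<Otimes>\<^sub>M borel) = {p \<in> space (M \<Otimes>\<^sub>M borel). snd p \<in> B}" by auto
  ultimately show ?thesis by simp
qed

lemma sec_eq: "\<omega> \<in> space M \<Longrightarrow> {x. (\<omega>, x) \<in> {p \<in> space (M \<Otimes>\<^sub>M borel). P p}} = {x. P (\<omega>, x)}"
  by (auto simp: space_pair_measure)

lemma xi_meas:
  assumes A: "A \<in> sets (M \<Otimes>\<^sub>M borel)" and S: "\<And>\<omega>. \<omega> \<in> space M \<Longrightarrow> {x. (\<omega>, x) \<in> A} = S \<omega>"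
  shows "(\<lambda>\<omega>. indicator xi.G0 \<omega> * emeasure (\<xi> \<omega>) (S \<omega>)) \<in> borel_measurable M"
  by (rule measurable_cong[THEN iffD1, OF _ xi.meas_sec[OF A]]) (simp add: S)

lemma xi_shift:
  assumes A: "A \<in> sets (M \<Otimes>\<^sub>M borel)" and S: "\<And>\<omega>. \<omega> \<in> space M \<Longrightarrow> {x. (\<omega>, x) \<in> A} = S \<omega>"
  shows "(\<integral>\<^sup>+\<omega>. emeasure (\<xi> (\<theta> z \<omega>)) (S (\<theta> z \<omega>)) \<partial>M) = (\<integral>\<^sup>+\<omega>. emeasure (\<xi> \<omega>) (S \<omega>) \<partial>M)"
  by (rule nn_shift_AE[OF xi_meas[OF A S]]) (use xi.AE_G0_eq[of "\<lambda>\<omega>. emeasure (\<xi> \<omega>) (S \<omega>)"] in \<open>auto elim: AE_mp\<close>)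

lemma S_borel:
  fixes S :: "'a \<Rightarrow> 'd set"
  assumes A: "A \<in> sets (M \<Otimes>\<^sub>M borel)" and S: "\<And>\<omega>. \<omega> \<in> space M \<Longrightarrow> {x. (\<omega>, x) \<in> A} = S \<omega>"
    and "\<omega> \<in> space M"
  shows "S \<omega> \<in> sets borel"
  using xi.sec_borel[OF A, of \<omega>] S assms(3) by simp

definition aa where "aa k \<omega> = emeasure (\<xi> \<omega>) {x \<in> Qc. \<exists>y\<in>tile k. \<tau> \<omega> x = Some y}"
definition bb where "bb k \<omega> = emeasure (\<xi> \<omega>) {x \<in> tile (- k). \<exists>y\<in>Qc. \<tau> \<omega> x = Some y}"

definition AA where "AA k = {p \<in> space (M \<Otimes>\<^sub>M borel). snd p \<in> Qc} \<inter> {p \<in> space (M \<Otimes>\<^sub>M borel). \<exists>y\<in>tile k. \<tau> (fst p) (snd p) = Some y}"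
definition BB where "BB k = {p \<in> space (M \<Otimes>\<^sub>M borel). snd p \<in> tile (- k)} \<inter> {p \<in> space (M \<Otimes>\<^sub>M borel). \<exists>y\<in>Qc. \<tau> (fst p) (snd p) = Some y}"

lemma AA_sets: "AA k \<in> sets (M \<Otimes>\<^sub>M borel)"
  unfolding AA_def by (intro sets.Int snd_sets tgt_sets) auto
lemma BB_sets: "BB k \<in> sets (M \<Otimes>\<^sub>M borel)"
  unfolding BB_def by (intro sets.Int snd_sets tgt_sets) auto
lemma AA_sec: "\<omega> \<in> space M \<Longrightarrow> {x. (\<omega>, x) \<in> AA k} = {x \<in> Qc. \<exists>y\<in>tile k. \<tau> \<omega> x = Some y}"
  unfolding AA_def by (auto simp: space_pair_measure)
lemma BB_sec: "\<omega> \<in> space M \<Longrightarrow> {x. (\<omega>, x) \<in> BB k} = {x \<in> tile (- k). \<exists>y\<in>Qc. \<tau> \<omega> x = Some y}"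
  unfolding BB_def by (auto simp: space_pair_measure)

lemma aa_shift: "AE \<omega> in M. aa k (\<theta> (- k) \<omega>) = bb k \<omega>"
  using xi.shift_eq cov
proof (rule AE_mp[OF _ AE_mp], intro AE_I2 impI)
  fix \<omega> assume \<omega>: "\<omega> \<in> space M"
    and sh: "\<forall>z. \<forall>D\<in>sets borel. emeasure (\<xi> (\<theta> z \<omega>)) D = emeasure (\<xi> \<omega>) {x. x - z \<in> D}"
    and cv: "\<forall>x y. \<tau> (\<theta> y \<omega>) (x - y) = map_option (\<lambda>z. z - y) (\<tau> \<omega> x)"
  let ?D = "{x \<in> Qc. \<exists>y\<in>tile k. \<tau> (\<theta> (- k) \<omega>) x = Some y}"
  have D: "?D \<in> sets borel"
    using S_borel[OF AA_sets AA_sec theta_space[OF \<omega>]] .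
  have "{x. x - (- k) \<in> ?D} = {x \<in> tile (- k). \<exists>y\<in>Qc. \<tau> \<omega> x = Some y}"
  proof -
    have "\<tau> (\<theta> (- k) \<omega>) (x + k) = map_option (\<lambda>w. w + k) (\<tau> \<omega> x)" for x
      using cov0[OF cv, of "- k" "x + k"] by simp
    then show ?thesis
      by (auto simp: tile_def algebra_simps)
  qed
  then show "aa k (\<theta> (- k) \<omega>) = bb k \<omega>"
    unfolding aa_def bb_def using sh D by simp
qed

lemma E_aa_bb: "(\<integral>\<^sup>+\<omega>. aa k \<omega> \<partial>M) = (\<integral>\<^sup>+\<omega>. bb k \<omega> \<partial>M)"
proof -
  have "(\<integral>\<^sup>+\<omega>. aa k \<omega> \<partial>M) = (\<integral>\<^sup>+\<omega>. aa k (\<theta> (- k) \<omega>) \<partial>M)"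
    unfolding aa_def by (rule xi_shift[OF AA_sets AA_sec, symmetric])
  also have "\<dots> = (\<integral>\<^sup>+\<omega>. bb k \<omega> \<partial>M)"
    by (rule nn_integral_cong_AE[OF aa_shift])
  finally show ?thesis .
qed

end

context mainS begin

lemma swap_Lat:
  assumes m: "\<And>k. k \<in> Lat \<Longrightarrow> (\<lambda>\<omega>. indicator xi.G0 \<omega> * f k \<omega>) \<in> borel_measurable M"
  shows "(\<integral>\<^sup>+\<omega>. (\<integral>\<^sup>+k. f k \<omega> \<partial>count_space Lat) \<partial>M) = (\<integral>\<^sup>+k. (\<integral>\<^sup>+\<omega>. f k \<omega> \<partial>M) \<partial>count_space Lat)"
proof -
  have "(\<integral>\<^sup>+\<omega>. (\<integral>\<^sup>+k. f k \<omega> \<partial>count_space Lat) \<partial>M) = (\<integral>\<^sup>+\<omega>. (\<integral>\<^sup>+k. indicator xi.G0 \<omega> * f k \<omega> \<partial>count_space Lat) \<partial>M)"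
    apply (rule nn_integral_cong_AE) using xi.AE_G0 by eventually_elim (simp add: indicator_def)
  also have "\<dots> = (\<integral>\<^sup>+k. (\<integral>\<^sup>+\<omega>. indicator xi.G0 \<omega> * f k \<omega> \<partial>M) \<partial>count_space Lat)"
    by (rule nn_integral_count_space_nn_integral[OF Lat_countable m])
  also have "\<dots> = (\<integral>\<^sup>+k. (\<integral>\<^sup>+\<omega>. f k \<omega> \<partial>M) \<partial>count_space Lat)"
    apply (rule nn_integral_cong, rule nn_integral_cong_AE) using xi.AE_G0 by eventually_elim (simp add: indicator_def)
  finally show ?thesis .
qed

lemma sum_aa:
  assumes \<omega>: "\<omega> \<in> space M"
  shows "emeasure (\<xi> \<omega>) {x \<in> Qc. \<tau> \<omega> x \<noteq> None} = (\<integral>\<^sup>+k. aa k \<omega> \<partial>count_space Lat)"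
proof -
  have U: "{x \<in> Qc. \<tau> \<omega> x \<noteq> None} = (\<Union>k\<in>Lat. {x \<in> Qc. \<exists>y\<in>tile k. \<tau> \<omega> x = Some y})"
    using tile_cover by fastforce
  have "emeasure (\<xi> \<omega>) (\<Union>k\<in>Lat. {x \<in> Qc. \<exists>y\<in>tile k. \<tau> \<omega> x = Some y}) = (\<integral>\<^sup>+k. aa k \<omega> \<partial>count_space Lat)"
    unfolding aa_def
  proof (rule emeasure_UN_countable)
    show "{x \<in> Qc. \<exists>y\<in>tile k. \<tau> \<omega> x = Some y} \<in> sets (\<xi> \<omega>)" for k
      using S_borel[OF AA_sets AA_sec \<omega>] xi.sets_mu[OF \<omega>] by simp
    show "countable Lat" by (rule Lat_countable)
    show "disjoint_family_on (\<lambda>k. {x \<in> Qc. \<exists>y\<in>tile k. \<tau> \<omega> x = Some y}) Lat"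
      unfolding disjoint_family_on_def using tile_unique by fastforce
  qed
  then show ?thesis using U by simp
qed

lemma sum_bb:
  assumes \<omega>: "\<omega> \<in> space M"
  shows "emeasure (\<xi> \<omega>) {x. \<exists>y\<in>Qc. \<tau> \<omega> x = Some y} = (\<integral>\<^sup>+k. bb k \<omega> \<partial>count_space Lat)"
proof -
  have U: "{x. \<exists>y\<in>Qc. \<tau> \<omega> x = Some y} = (\<Union>k\<in>Lat. {x \<in> tile (- k). \<exists>y\<in>Qc. \<tau> \<omega> x = Some y})"
  proof (rule set_eqI, rule iffI)
    fix x :: 'd assume x: "x \<in> {x. \<exists>y\<in>Qc. \<tau> \<omega> x = Some y}"
    obtain k0 where "k0 \<in> Lat" "x \<in> tile k0" using tile_cover by blast
    then show "x \<in> (\<Union>k\<in>Lat. {x \<in> tile (- k). \<exists>y\<in>Qc. \<tau> \<omega> x = Some y})"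
      using x Lat_uminus[of k0] by (intro UN_I[of "- k0"]) auto
  qed auto
  have "emeasure (\<xi> \<omega>) (\<Union>k\<in>Lat. {x \<in> tile (- k). \<exists>y\<in>Qc. \<tau> \<omega> x = Some y}) = (\<integral>\<^sup>+k. bb k \<omega> \<partial>count_space Lat)"
    unfolding bb_def
  proof (rule emeasure_UN_countable)
    show "{x \<in> tile (- k). \<exists>y\<in>Qc. \<tau> \<omega> x = Some y} \<in> sets (\<xi> \<omega>)" for k
      using S_borel[OF BB_sets BB_sec \<omega>] xi.sets_mu[OF \<omega>] by simp
    show "countable Lat" by (rule Lat_countable)
    show "disjoint_family_on (\<lambda>k. {x \<in> tile (- k). \<exists>y\<in>Qc. \<tau> \<omega> x = Some y}) Lat"
    proof (unfold disjoint_family_on_def, intro ballI impI)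
      fix k k' :: 'd assume k: "k \<in> Lat" "k' \<in> Lat" "k \<noteq> k'"
      have "- k \<noteq> - k'" using k by simp
      then show "{x \<in> tile (- k). \<exists>y\<in>Qc. \<tau> \<omega> x = Some y} \<inter> {x \<in> tile (- k'). \<exists>y\<in>Qc. \<tau> \<omega> x = Some y} = {}"
        using tile_unique[OF Lat_uminus[OF k(1)] Lat_uminus[OF k(2)]] by blast
    qed
  qed
  then show ?thesis using U by simp
qed

theorem MTP: "(\<integral>\<^sup>+\<omega>. emeasure (\<xi> \<omega>) {x \<in> Qc. \<tau> \<omega> x \<noteq> None} \<partial>M) =
   (\<integral>\<^sup>+\<omega>. emeasure (\<xi> \<omega>) {x. \<exists>y\<in>Qc. \<tau> \<omega> x = Some y} \<partial>M)"
proof -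
  have "(\<integral>\<^sup>+\<omega>. emeasure (\<xi> \<omega>) {x \<in> Qc. \<tau> \<omega> x \<noteq> None} \<partial>M) = (\<integral>\<^sup>+\<omega>. (\<integral>\<^sup>+k. aa k \<omega> \<partial>count_space Lat) \<partial>M)"
    by (rule nn_integral_cong) (rule sum_aa)
  also have "\<dots> = (\<integral>\<^sup>+k. (\<integral>\<^sup>+\<omega>. aa k \<omega> \<partial>M) \<partial>count_space Lat)"
    by (rule swap_Lat) (unfold aa_def, rule xi_meas[OF AA_sets AA_sec])
  also have "\<dots> = (\<integral>\<^sup>+k. (\<integral>\<^sup>+\<omega>. bb k \<omega> \<partial>M) \<partial>count_space Lat)"
    by (simp add: E_aa_bb)
  also have "\<dots> = (\<integral>\<^sup>+\<omega>. (\<integral>\<^sup>+k. bb k \<omega> \<partial>count_space Lat) \<partial>M)"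
    by (rule swap_Lat[symmetric]) (unfold bb_def, rule xi_meas[OF BB_sets BB_sec])
  also have "\<dots> = (\<integral>\<^sup>+\<omega>. emeasure (\<xi> \<omega>) {x. \<exists>y\<in>Qc. \<tau> \<omega> x = Some y} \<partial>M)"
    by (rule nn_integral_cong) (rule sum_bb[symmetric])
  finally show ?thesis .
qed

end

context flowS begin

lemma pair_meas_l: "(\<lambda>(\<omega>, x). \<theta> x \<omega>) \<in> (M \<Otimes>\<^sub>M lborel) \<rightarrow>\<^sub>M M"
  using pair_meas by (subst measurable_cong_sets[OF sets_pair_measure_cong[OF refl sets_lborel] refl])

lemma ergodic_ae:
  assumes erg: "ergodic_flow M \<theta>" and A: "A \<in> sets M"
    and inv: "\<And>z. AE \<omega> in M. (\<theta> z \<omega> \<in> A \<longleftrightarrow> \<omega> \<in> A)"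
  shows "measure M A = 0 \<or> measure M A = 1"
proof -
  interpret P: prob_space M by (rule prob)
  interpret PS: pair_sigma_finite M lborel by unfold_locales
  define Q where "Q = {p \<in> space (M \<Otimes>\<^sub>M lborel). \<theta> (snd p) (fst p) \<notin> A}"
  have Q: "Q \<in> sets (M \<Otimes>\<^sub>M lborel)"
  proof -
    have "(\<lambda>(\<omega>, x). \<theta> x \<omega>) -` (space M - A) \<inter> space (M \<Otimes>\<^sub>M lborel) \<in> sets (M \<Otimes>\<^sub>M lborel)"
      by (rule measurable_sets[OF pair_meas_l]) (use A in auto)
    moreover have "(\<lambda>(\<omega>, x). \<theta> x \<omega>) -` (space M - A) \<inter> space (M \<Otimes>\<^sub>M lborel) = Q"
      unfolding Q_def using theta_space by (auto simp: space_pair_measure)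
    ultimately show ?thesis by simp
  qed
  have secQ: "Pair \<omega> -` Q = {x. \<theta> x \<omega> \<notin> A}" if "\<omega> \<in> space M" for \<omega>
    using that unfolding Q_def by (auto simp: space_pair_measure)
  have secQ_sets: "{x. \<theta> x \<omega> \<notin> A} \<in> sets borel" if "\<omega> \<in> space M" for \<omega>
    using sets_Pair1[OF Q, of \<omega>] secQ[OF that] by simp
  define A' where "A' = {\<omega> \<in> space M. emeasure lborel {x. \<theta> x \<omega> \<notin> A} = 0}"
  have A'_sets: "A' \<in> sets M"
  proof -
    have "(\<lambda>\<omega>. emeasure lborel (Pair \<omega> -` Q)) \<in> borel_measurable M"
      by (rule lborel.measurable_emeasure_Pair[OF Q])
    then have "{\<omega> \<in> space M. emeasure lborel (Pair \<omega> -` Q) = 0} \<in> sets M"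
      by measurable
    moreover have "{\<omega> \<in> space M. emeasure lborel (Pair \<omega> -` Q) = 0} = A'"
      unfolding A'_def using secQ by auto
    ultimately show ?thesis by simp
  qed
  have transl: "emeasure lborel {x. \<theta> x (\<theta> z \<omega>) \<notin> A} = emeasure lborel {x. \<theta> x \<omega> \<notin> A}"
    if \<omega>: "\<omega> \<in> space M" for z \<omega>
  proof -
    have "{x. \<theta> x (\<theta> z \<omega>) \<notin> A} = (+) z -` {x. \<theta> x \<omega> \<notin> A} \<inter> space lborel"
      using theta_add[OF \<omega>] by (auto simp: add.commute)
    also have "emeasure lborel \<dots> = emeasure (distr lborel borel ((+) z)) {x. \<theta> x \<omega> \<notin> A}"
      by (rule emeasure_distr[symmetric]) (auto simp: secQ_sets[OF \<omega>])
    also have "\<dots> = emeasure lborel {x. \<theta> x \<omega> \<notin> A}" by (simp add: lborel_distr_plus)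
    finally show ?thesis .
  qed
  have "\<theta> z -` A' \<inter> space M = A'" for z
    unfolding A'_def using transl theta_space by auto
  then have 01: "measure M A' = 0 \<or> measure M A' = 1"
    using erg A'_sets unfolding ergodic_flow_def by blast
  have "AE x in lborel. AE \<omega> in M. (\<theta> x \<omega> \<in> A \<longleftrightarrow> \<omega> \<in> A)"
    using inv by simp
  moreover have "{p \<in> space (M \<Otimes>\<^sub>M lborel). (\<theta> (snd p) (fst p) \<in> A \<longleftrightarrow> fst p \<in> A)} \<in> sets (M \<Otimes>\<^sub>M lborel)"
  proof -
    have F: "{p \<in> space (M \<Otimes>\<^sub>M lborel). fst p \<in> A} \<in> sets (M \<Otimes>\<^sub>M lborel)"
      using A by measurable
    have eq: "{p \<in> space (M \<Otimes>\<^sub>M lborel). (\<theta> (snd p) (fst p) \<in> A \<longleftrightarrow> fst p \<in> A)} =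
       (space (M \<Otimes>\<^sub>M lborel) - Q) \<inter> {p \<in> space (M \<Otimes>\<^sub>M lborel). fst p \<in> A} \<union>
       (Q \<inter> (space (M \<Otimes>\<^sub>M lborel) - {p \<in> space (M \<Otimes>\<^sub>M lborel). fst p \<in> A}))"
      unfolding Q_def by auto
    show ?thesis unfolding eq by (intro sets.Un sets.Int sets.Diff sets.top Q F)
  qed
  ultimately have ae: "AE \<omega> in M. AE x in lborel. (\<theta> x \<omega> \<in> A \<longleftrightarrow> \<omega> \<in> A)"
    using PS.AE_commute[of "\<lambda>\<omega> x. (\<theta> x \<omega> \<in> A \<longleftrightarrow> \<omega> \<in> A)"] by simp
  have "AE \<omega> in M. (\<omega> \<in> A' \<longleftrightarrow> \<omega> \<in> A)"
    using ae
  proof (rule AE_mp, intro AE_I2 impI)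
    fix \<omega> assume \<omega>: "\<omega> \<in> space M" and H: "AE x in lborel. (\<theta> x \<omega> \<in> A \<longleftrightarrow> \<omega> \<in> A)"
    have iff: "(AE x in lborel. \<theta> x \<omega> \<in> A) \<longleftrightarrow> emeasure lborel {x. \<theta> x \<omega> \<notin> A} = 0"
      by (rule AE_iff_measurable) (auto simp: secQ_sets[OF \<omega>])
    show "\<omega> \<in> A' \<longleftrightarrow> \<omega> \<in> A"
    proof
      assume "\<omega> \<in> A'"
      then have "AE x in lborel. \<theta> x \<omega> \<in> A" using iff A'_def by auto
      with H have c: "AE x in lborel. (\<theta> x \<omega> \<in> A \<longleftrightarrow> \<omega> \<in> A) \<and> \<theta> x \<omega> \<in> A"
        by (simp add: AE_conj_iff)
      have nF: "\<not> (AE x in (lborel::'d measure). False)"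
        by (subst AE_iff_measurable[of UNIV]) auto
      show "\<omega> \<in> A"
      proof (rule ccontr)
        assume n: "\<omega> \<notin> A"
        have "AE x in (lborel::'d measure). False" using c n by (auto elim: eventually_mono)
        with nF show False by simp
      qed
    next
      assume "\<omega> \<in> A"
      have "AE x in lborel. \<theta> x \<omega> \<in> A" by (rule eventually_mono[OF H]) (use \<open>\<omega> \<in> A\<close> in auto)
      then show "\<omega> \<in> A'" using iff \<omega> A'_def by auto
    qed
  qed
  then have "measure M A' = measure M A"
    by (rule measure_eq_AE[OF _ A'_sets A])
  with 01 show ?thesis by simp
qed

end

lemma sum_eq_le_ennreal:
  fixes a b :: "'x \<Rightarrow> ennreal"
  assumes F: "finite F" and le: "\<And>y. y \<in> F \<Longrightarrow> a y \<le> b y" and eq: "(\<Sum>y\<in>F. a y) = (\<Sum>y\<in>F. b y)"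
    and fin: "(\<Sum>y\<in>F. b y) < \<infinity>" and y: "y \<in> F"
  shows "a y = b y"
proof -
  have "(\<Sum>y\<in>F. b y) = (\<Sum>y\<in>F. a y + (b y - a y))"
    by (rule sum.cong[OF refl]) (simp add: add_diff_inverse_ennreal le)
  also have "\<dots> = (\<Sum>y\<in>F. a y) + (\<Sum>y\<in>F. b y - a y)" by (rule sum.distrib)
  finally have "(\<Sum>y\<in>F. b y) = (\<Sum>y\<in>F. b y) + (\<Sum>y\<in>F. b y - a y)" by (simp add: eq)
  then have "(\<Sum>y\<in>F. b y) + 0 = (\<Sum>y\<in>F. b y) + (\<Sum>y\<in>F. b y - a y)" by simp
  then have "(\<Sum>y\<in>F. b y - a y) = 0" using fin
    unfolding ennreal_add_left_cancel by auto
  then have z: "b y - a y = 0" using F y by simp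
  have "b y \<le> (\<Sum>y\<in>F. b y)" by (rule member_le_sum[OF y _ F]) simp
  then have "b y < \<top>" using fin by (simp add: le_less_trans)
  then have "b y \<le> a y" using z by (simp add: diff_eq_0_iff_ennreal)
  then show ?thesis using le[OF y] by simp
qed

context mainS begin

definition goodE where "goodE \<omega> \<longleftrightarrow> \<omega> \<in> space M \<and> (\<forall>B. bounded B \<longrightarrow> finite (B \<inter> atoms \<eta> \<omega>)) \<and>
   emeasure (\<eta> \<omega>) (UNIV - atoms \<eta> \<omega>) = 0 \<and> (\<forall>C. bounded C \<longrightarrow> emeasure (\<eta> \<omega>) C < \<infinity>) \<and>
   null_in (\<xi> \<omega>) {z. \<exists>y. \<tau> \<omega> z = Some y \<and> y \<notin> atoms \<eta> \<omega>} \<and>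
   eta_star \<eta> \<omega> {x. emeasure (\<xi> \<omega>) (cell \<tau> \<omega> x) > ennreal \<alpha> * emeasure (\<eta> \<omega>) {x}} = 0"

lemma AE_goodE: "AE \<omega> in M. goodE \<omega>"
proof -
  have "AE \<omega> in M. null_in (\<xi> \<omega>) {z. \<exists>y. \<tau> \<omega> z = Some y \<and> y \<notin> atoms \<eta> \<omega>}"
    "AE \<omega> in M. eta_star \<eta> \<omega> {x. emeasure (\<xi> \<omega>) (cell \<tau> \<omega> x) > ennreal \<alpha> * emeasure (\<eta> \<omega>) {x}} = 0"
    using app unfolding appetite_def by auto
  moreover have "AE \<omega> in M. (\<forall>B. bounded B \<longrightarrow> finite (B \<inter> atoms \<eta> \<omega>)) \<and> emeasure (\<eta> \<omega>) (UNIV - atoms \<eta> \<omega>) = 0"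
    using dlf unfolding discrete_locally_finite_def by auto
  moreover note eta.AE_lf
  moreover have "AE \<omega> in M. \<omega> \<in> space M" by (rule AE_space)
  ultimately show ?thesis unfolding goodE_def by eventually_elim auto
qed

lemma cell_borel: "\<omega> \<in> space M \<Longrightarrow> cell \<tau> \<omega> y \<in> sets borel"
proof -
  assume \<omega>: "\<omega> \<in> space M"
  have "{x. (\<omega>, x) \<in> {p \<in> space (M \<Otimes>\<^sub>M borel). \<exists>y'\<in>{y}. \<tau> (fst p) (snd p) = Some y'}} \<in> sets borel"
    by (rule xi.sec_borel[OF tgt_sets]) simp
  then show ?thesis using \<omega> by (simp add: cell_def space_pair_measure)
qed

lemma tgt_borel: "\<omega> \<in> space M \<Longrightarrow> B \<in> sets borel \<Longrightarrow> {x. \<exists>y\<in>B. \<tau> \<omega> x = Some y} \<in> sets borel"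
proof -
  assume \<omega>: "\<omega> \<in> space M" and B: "B \<in> sets borel"
  have "{x. (\<omega>, x) \<in> {p \<in> space (M \<Otimes>\<^sub>M borel). \<exists>y'\<in>B. \<tau> (fst p) (snd p) = Some y'}} \<in> sets borel"
    by (rule xi.sec_borel[OF tgt_sets[OF B]])
  then show ?thesis using \<omega> by (simp add: space_pair_measure)
qed

lemma NS_borel: "\<omega> \<in> space M \<Longrightarrow> {x. \<tau> \<omega> x = None} \<in> sets borel"
proof -
  assume \<omega>: "\<omega> \<in> space M"
  have "{x. (\<omega>, x) \<in> {p \<in> space (M \<Otimes>\<^sub>M borel). \<tau> (fst p) (snd p) = None}} \<in> sets borel"
    by (rule xi.sec_borel[OF none_sets])
  then show ?thesis using \<omega> by (simp add: space_pair_measure)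
qed

lemma atoms_countable: "goodE \<omega> \<Longrightarrow> countable (atoms \<eta> \<omega>)"
proof -
  assume g: "goodE \<omega>"
  have "atoms \<eta> \<omega> = (\<Union>n::nat. ball 0 (real n) \<inter> atoms \<eta> \<omega>)"
  proof -
    have "\<exists>n::nat. x \<in> ball 0 (real n)" for x :: 'd
    proof -
      obtain n :: nat where "norm x < real n" using reals_Archimedean2 by blast
      then show ?thesis by (auto simp: dist_norm)
    qed
    then show ?thesis by blast
  qed
  moreover have "countable (\<Union>n::nat. ball 0 (real n) \<inter> atoms \<eta> \<omega>)"
    using g unfolding goodE_def by (intro countable_UN) (auto intro: countable_finite)
  ultimately show ?thesis by simp
qed

lemma atoms_borel: "goodE \<omega> \<Longrightarrow> atoms \<eta> \<omega> \<in> sets borel"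
  by (rule sets.countable) (auto simp: atoms_countable)

lemma eta_sum:
  assumes g: "goodE \<omega>" and B: "B \<in> sets borel" "bounded B"
  shows "emeasure (\<eta> \<omega>) B = (\<Sum>y\<in>B \<inter> atoms \<eta> \<omega>. emeasure (\<eta> \<omega>) {y})"
proof -
  have \<omega>: "\<omega> \<in> space M" using g goodE_def by auto
  have sets: "sets (\<eta> \<omega>) = sets borel" by (rule eta.sets_mu[OF \<omega>])
  have fin: "finite (B \<inter> atoms \<eta> \<omega>)" using g B unfolding goodE_def by auto
  have null: "B - atoms \<eta> \<omega> \<in> null_sets (\<eta> \<omega>)"
  proof -
    have "emeasure (\<eta> \<omega>) (B - atoms \<eta> \<omega>) \<le> emeasure (\<eta> \<omega>) (UNIV - atoms \<eta> \<omega>)"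
      by (rule emeasure_mono) (use atoms_borel[OF g] sets in auto)
    then show ?thesis using g B atoms_borel[OF g] sets unfolding goodE_def by (auto simp: null_sets_def)
  qed
  have "emeasure (\<eta> \<omega>) B = emeasure (\<eta> \<omega>) ((B \<inter> atoms \<eta> \<omega>) \<union> (B - atoms \<eta> \<omega>))"
    by (rule arg_cong[where f="emeasure (\<eta> \<omega>)"]) blast
  also have "\<dots> = emeasure (\<eta> \<omega>) (B \<inter> atoms \<eta> \<omega>)"
    by (rule emeasure_Un_null_set[OF _ null]) (use B atoms_borel[OF g] sets in auto)
  also have "\<dots> = (\<Sum>y\<in>B \<inter> atoms \<eta> \<omega>. emeasure (\<eta> \<omega>) {y})"
    by (rule emeasure_eq_sum_singleton[OF fin]) (simp add: sets)
  finally show ?thesis .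
qed

lemma tgt_sum:
  assumes g: "goodE \<omega>" and B: "B \<in> sets borel" "bounded B"
  shows "emeasure (\<xi> \<omega>) {x. \<exists>y\<in>B. \<tau> \<omega> x = Some y} = (\<Sum>y\<in>B \<inter> atoms \<eta> \<omega>. emeasure (\<xi> \<omega>) (cell \<tau> \<omega> y))"
proof -
  have \<omega>: "\<omega> \<in> space M" using g goodE_def by auto
  have sets: "sets (\<xi> \<omega>) = sets borel" by (rule xi.sets_mu[OF \<omega>])
  have fin: "finite (B \<inter> atoms \<eta> \<omega>)" using g B unfolding goodE_def by auto
  obtain N where N: "N \<in> null_sets (\<xi> \<omega>)" "{z. \<exists>y. \<tau> \<omega> z = Some y \<and> y \<notin> atoms \<eta> \<omega>} \<subseteq> N"
    using g unfolding goodE_def null_in_def by auto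
  have BA: "B \<inter> atoms \<eta> \<omega> \<in> sets borel" using B atoms_borel[OF g] by auto
  have "emeasure (\<xi> \<omega>) {x. \<exists>y\<in>B. \<tau> \<omega> x = Some y} \<le> emeasure (\<xi> \<omega>) ({x. \<exists>y\<in>B \<inter> atoms \<eta> \<omega>. \<tau> \<omega> x = Some y} \<union> N)"
    by (rule emeasure_mono) (use N tgt_borel[OF \<omega> BA] sets in auto)
  also have "\<dots> = emeasure (\<xi> \<omega>) {x. \<exists>y\<in>B \<inter> atoms \<eta> \<omega>. \<tau> \<omega> x = Some y}"
    by (rule emeasure_Un_null_set[OF _ N(1)]) (use tgt_borel[OF \<omega> BA] sets in auto)
  finally have le: "emeasure (\<xi> \<omega>) {x. \<exists>y\<in>B. \<tau> \<omega> x = Some y} \<le> emeasure (\<xi> \<omega>) {x. \<exists>y\<in>B \<inter> atoms \<eta> \<omega>. \<tau> \<omega> x = Some y}" .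
  have ge: "emeasure (\<xi> \<omega>) {x. \<exists>y\<in>B \<inter> atoms \<eta> \<omega>. \<tau> \<omega> x = Some y} \<le> emeasure (\<xi> \<omega>) {x. \<exists>y\<in>B. \<tau> \<omega> x = Some y}"
    by (rule emeasure_mono) (use tgt_borel[OF \<omega> B(1)] sets in auto)
  have U: "{x. \<exists>y\<in>B \<inter> atoms \<eta> \<omega>. \<tau> \<omega> x = Some y} = (\<Union>y\<in>B \<inter> atoms \<eta> \<omega>. cell \<tau> \<omega> y)"
    by (auto simp: cell_def)
  have "emeasure (\<xi> \<omega>) (\<Union>y\<in>B \<inter> atoms \<eta> \<omega>. cell \<tau> \<omega> y) = (\<Sum>y\<in>B \<inter> atoms \<eta> \<omega>. emeasure (\<xi> \<omega>) (cell \<tau> \<omega> y))"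
  proof (rule sum_emeasure[symmetric])
    show "cell \<tau> \<omega> ` (B \<inter> atoms \<eta> \<omega>) \<subseteq> sets (\<xi> \<omega>)" using cell_borel[OF \<omega>] sets by auto
    show "disjoint_family_on (cell \<tau> \<omega>) (B \<inter> atoms \<eta> \<omega>)" by (auto simp: disjoint_family_on_def cell_def)
  qed (rule fin)
  moreover have "emeasure (\<xi> \<omega>) {x. \<exists>y\<in>B. \<tau> \<omega> x = Some y} = emeasure (\<xi> \<omega>) {x. \<exists>y\<in>B \<inter> atoms \<eta> \<omega>. \<tau> \<omega> x = Some y}"
    by (rule antisym[OF le ge])
  ultimately show ?thesis unfolding U by simp
qed

lemma cell_le: "goodE \<omega> \<Longrightarrow> y \<in> atoms \<eta> \<omega> \<Longrightarrow> emeasure (\<xi> \<omega>) (cell \<tau> \<omega> y) \<le> ennreal \<alpha> * emeasure (\<eta> \<omega>) {y}"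
proof -
  assume g: "goodE \<omega>" and y: "y \<in> atoms \<eta> \<omega>"
  have "{x. emeasure (\<xi> \<omega>) (cell \<tau> \<omega> x) > ennreal \<alpha> * emeasure (\<eta> \<omega>) {x}} \<inter> atoms \<eta> \<omega> = {}"
    using g unfolding goodE_def eta_star_def emeasure_count_space_eq_0 by simp
  then show ?thesis using y by (auto simp: not_less[symmetric])
qed

end

lemma Qc_sub: "Qc \<subseteq> cbox 0 (One::'d::euclidean_space)"
  unfolding Qc_def by (auto simp: mem_box less_imp_le)

lemma Qc_bounded: "bounded (Qc::'d::euclidean_space set)"
  using Qc_sub bounded_cbox bounded_subset by blast

context rmS begin

lemma cbox_Qc:
  assumes fin: "(\<integral>\<^sup>+\<omega>. emeasure (\<mu> \<omega>) (cbox 0 One) \<partial>M) < \<infinity>"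
  shows "AE \<omega> in M. \<forall>S\<in>sets borel. emeasure (\<mu> \<omega>) (cbox 0 One \<inter> S) = emeasure (\<mu> \<omega>) (Qc \<inter> S)"
  using boundary_null[OF fin]
proof (rule AE_mp, intro AE_I2 impI ballI)
  fix \<omega> and S :: "'d set" assume \<omega>: "\<omega> \<in> space M" and z: "emeasure (\<mu> \<omega>) (cbox 0 One - Qc) = 0" and S: "S \<in> sets borel"
  have sets: "sets (\<mu> \<omega>) = sets borel" by (rule sets_mu[OF \<omega>])
  have null: "cbox 0 One - Qc \<in> null_sets (\<mu> \<omega>)" using z sets by (auto simp: null_sets_def)
  have "emeasure (\<mu> \<omega>) (cbox 0 One \<inter> S) \<le> emeasure (\<mu> \<omega>) ((Qc \<inter> S) \<union> (cbox 0 One - Qc))"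
    by (rule emeasure_mono) (use S sets in auto)
  also have "\<dots> = emeasure (\<mu> \<omega>) (Qc \<inter> S)"
    by (rule emeasure_Un_null_set[OF _ null]) (use S sets in auto)
  finally have le: "emeasure (\<mu> \<omega>) (cbox 0 One \<inter> S) \<le> emeasure (\<mu> \<omega>) (Qc \<inter> S)" .
  have "emeasure (\<mu> \<omega>) (Qc \<inter> S) \<le> emeasure (\<mu> \<omega>) (cbox 0 One \<inter> S)"
    by (rule emeasure_mono) (use S sets Qc_sub in auto)
  with le show "emeasure (\<mu> \<omega>) (cbox 0 One \<inter> S) = emeasure (\<mu> \<omega>) (Qc \<inter> S)" by (rule antisym)
qed

lemma E_Qc:
  assumes fin: "(\<integral>\<^sup>+\<omega>. emeasure (\<mu> \<omega>) (cbox 0 One) \<partial>M) < \<infinity>"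
  shows "(\<integral>\<^sup>+\<omega>. emeasure (\<mu> \<omega>) Qc \<partial>M) = (\<integral>\<^sup>+\<omega>. emeasure (\<mu> \<omega>) (cbox 0 One) \<partial>M)"
  apply (rule nn_integral_cong_AE) using cbox_Qc[OF fin] by eventually_elim (metis Int_UNIV_right sets.top space_borel)

end

locale mainI = mainS +
  assumes ix0: "0 < intensity M \<xi>" and ix: "intensity M \<xi> < \<infinity>"
    and ie0: "0 < intensity M \<eta>" and ie: "intensity M \<eta> < \<infinity>"
    and ale: "ennreal \<alpha> \<le> intensity M \<xi> / intensity M \<eta>"
begin

lemma finx: "(\<integral>\<^sup>+\<omega>. emeasure (\<xi> \<omega>) (cbox 0 One) \<partial>M) < \<infinity>" using ix unfolding intensity_def .
lemma fine: "(\<integral>\<^sup>+\<omega>. emeasure (\<eta> \<omega>) (cbox 0 One) \<partial>M) < \<infinity>" using ie unfolding intensity_def .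

lemma alpha_le: "ennreal \<alpha> * intensity M \<eta> \<le> intensity M \<xi>"
proof -
  have "ennreal \<alpha> * intensity M \<eta> \<le> (intensity M \<xi> / intensity M \<eta>) * intensity M \<eta>"
    by (rule mult_right_mono[OF ale]) simp
  also have "\<dots> = intensity M \<xi>"
    using ie0 ie by (simp add: ennreal_divide_times ennreal_times_divide mult.commute[of "intensity M \<xi>"]
        ennreal_mult_divide_eq)
  finally show ?thesis .
qed

definition Phi where "Phi \<omega> = indicator xi.G0 \<omega> * emeasure (\<xi> \<omega>) {x. \<tau> \<omega> x = None}"

lemma Phi_meas[measurable]: "Phi \<in> borel_measurable M"
  unfolding Phi_def by (rule xi_meas[OF none_sets]) (simp add: space_pair_measure)

definition Aset where "Aset = {\<omega> \<in> space M. 0 < Phi \<omega>}"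

lemma Aset_sets: "Aset \<in> sets M" unfolding Aset_def by measurable

lemma NS_shift:
  assumes \<omega>: "\<omega> \<in> space M"
    and sh: "\<forall>z. \<forall>D\<in>sets borel. emeasure (\<xi> (\<theta> z \<omega>)) D = emeasure (\<xi> \<omega>) {x. x - z \<in> D}"
    and cv: "\<forall>x y. \<tau> (\<theta> y \<omega>) (x - y) = map_option (\<lambda>z. z - y) (\<tau> \<omega> x)"
  shows "emeasure (\<xi> (\<theta> z \<omega>)) {x. \<tau> (\<theta> z \<omega>) x = None} = emeasure (\<xi> \<omega>) {x. \<tau> \<omega> x = None}"
proof -
  have "{x. x - z \<in> {x. \<tau> (\<theta> z \<omega>) x = None}} = {x. \<tau> \<omega> x = None}"
    using cv by auto
  then show ?thesis using sh NS_borel[OF theta_space[OF \<omega>]] by simp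
qed

lemma Aset_inv: "AE \<omega> in M. (\<theta> z \<omega> \<in> Aset \<longleftrightarrow> \<omega> \<in> Aset)"
proof -
  have "AE \<omega> in M. \<theta> z \<omega> \<in> xi.G0" by (rule AE_shift[OF xi.AE_G0])
  then show ?thesis using xi.AE_G0 xi.shift_eq cov
  proof (eventually_elim)
    case (elim \<omega>)
    then have \<omega>: "\<omega> \<in> space M" by (simp add: xi.G0_def)
    show ?case using elim NS_shift[OF \<omega>, of z] theta_space[OF \<omega>, of z] \<omega>
      unfolding Aset_def Phi_def by simp
  qed
qed

lemma Aset_01: "measure M Aset = 0 \<or> measure M Aset = 1"
  by (rule ergodic_ae[OF erg Aset_sets Aset_inv])

end

context mainI begin

definition P0 where "P0 \<omega> \<longleftrightarrow> (\<forall>y\<in>Qc \<inter> atoms \<eta> \<omega>. emeasure (\<xi> \<omega>) (cell \<tau> \<omega> y) = ennreal \<alpha> * emeasure (\<eta> \<omega>) {y})"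
definition Bal where "Bal \<omega> \<longleftrightarrow> (\<forall>y\<in>atoms \<eta> \<omega>. emeasure (\<xi> \<omega>) (cell \<tau> \<omega> y) = ennreal \<alpha> * emeasure (\<eta> \<omega>) {y})"

lemma P0_to_Bal:
  assumes p0: "AE \<omega> in M. P0 \<omega>"
  shows "AE \<omega> in M. Bal \<omega>"
proof -
  have "AE \<omega> in M. \<forall>k\<in>Lat. P0 (\<theta> k \<omega>)"
    by (subst AE_ball_countable[OF Lat_countable]) (auto intro: AE_shift[OF p0])
  then show ?thesis using xi.shift_eq eta.shift_eq cov AE_space
  proof eventually_elim
    case (elim \<omega>)
    then have \<omega>: "\<omega> \<in> space M"
      and P: "\<forall>k\<in>Lat. P0 (\<theta> k \<omega>)"
      and shx: "\<forall>z. \<forall>D\<in>sets borel. emeasure (\<xi> (\<theta> z \<omega>)) D = emeasure (\<xi> \<omega>) {x. x - z \<in> D}"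
      and she: "\<forall>z. \<forall>D\<in>sets borel. emeasure (\<eta> (\<theta> z \<omega>)) D = emeasure (\<eta> \<omega>) {x. x - z \<in> D}"
      and cv: "\<forall>x y. \<tau> (\<theta> y \<omega>) (x - y) = map_option (\<lambda>z. z - y) (\<tau> \<omega> x)" by auto
    show "Bal \<omega>" unfolding Bal_def
    proof
      fix y assume y: "y \<in> atoms \<eta> \<omega>"
      obtain k where k: "k \<in> Lat" "y \<in> tile k" using tile_cover by blast
      have yQ: "y - k \<in> Qc" using k unfolding tile_def by simp
      have s1: "{x. x - k \<in> {y - k}} = {y}" by auto
      have e1: "emeasure (\<eta> (\<theta> k \<omega>)) {y - k} = emeasure (\<eta> \<omega>) {y}"
        using she s1 by (metis borel_singleton sets.empty_sets)
      have s2: "{x. x - k \<in> cell \<tau> (\<theta> k \<omega>) (y - k)} = cell \<tau> \<omega> y"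
        using cv unfolding cell_def by auto
      have e2: "emeasure (\<xi> (\<theta> k \<omega>)) (cell \<tau> (\<theta> k \<omega>) (y - k)) = emeasure (\<xi> \<omega>) (cell \<tau> \<omega> y)"
        using shx cell_borel[OF theta_space[OF \<omega>]] s2 by metis
      have ya: "y - k \<in> atoms \<eta> (\<theta> k \<omega>)" using y e1 unfolding atoms_def by simp
      from P k(1) yQ ya have "emeasure (\<xi> (\<theta> k \<omega>)) (cell \<tau> (\<theta> k \<omega>) (y - k)) = ennreal \<alpha> * emeasure (\<eta> (\<theta> k \<omega>)) {y - k}"
        unfolding P0_def by blast
      then show "emeasure (\<xi> \<omega>) (cell \<tau> \<omega> y) = ennreal \<alpha> * emeasure (\<eta> \<omega>) {y}" using e1 e2 by simp
    qed
  qed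
qed

lemma NS_null_pos:
  assumes \<omega>: "\<omega> \<in> space M" and pos: "0 < emeasure (\<xi> \<omega>) {x. \<tau> \<omega> x = None}"
  shows "\<not> null_in (\<xi> \<omega>) {z. \<tau> \<omega> z = None}"
proof
  assume "null_in (\<xi> \<omega>) {z. \<tau> \<omega> z = None}"
  then obtain N where N: "N \<in> null_sets (\<xi> \<omega>)" "{z. \<tau> \<omega> z = None} \<subseteq> N" unfolding null_in_def by auto
  have "emeasure (\<xi> \<omega>) {x. \<tau> \<omega> x = None} \<le> emeasure (\<xi> \<omega>) N"
    by (rule emeasure_mono[OF N(2)]) (use N in auto)
  with N pos show False by (auto simp: null_sets_def)
qed

lemma case1:
  assumes m1: "measure M Aset = 1"
  shows "AE \<omega> in M. Bal \<omega>"
proof -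
  interpret P: prob_space M by (rule prob)
  have "AE \<omega> in M. \<omega> \<in> Aset" by (rule P.AE_prob_1[OF m1])
  moreover have "AE \<omega> in M. \<not> (\<not> null_in (\<xi> \<omega>) {z. \<tau> \<omega> z = None} \<and>
        eta_star \<eta> \<omega> {x. emeasure (\<xi> \<omega>) (cell \<tau> \<omega> x) < ennreal \<alpha> * emeasure (\<eta> \<omega>) {x}} > 0)"
    using app unfolding appetite_def by auto
  ultimately show ?thesis using AE_goodE
  proof eventually_elim
    case (elim \<omega>)
    then have \<omega>: "\<omega> \<in> space M" and g: "goodE \<omega>" unfolding Aset_def by auto
    have "0 < Phi \<omega>" using elim unfolding Aset_def by auto
    then have "0 < emeasure (\<xi> \<omega>) {x. \<tau> \<omega> x = None}" unfolding Phi_def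
      by (cases "\<omega> \<in> xi.G0") auto
    then have "\<not> null_in (\<xi> \<omega>) {z. \<tau> \<omega> z = None}" by (rule NS_null_pos[OF \<omega>])
    then have "eta_star \<eta> \<omega> {x. emeasure (\<xi> \<omega>) (cell \<tau> \<omega> x) < ennreal \<alpha> * emeasure (\<eta> \<omega>) {x}} = 0"
      using elim by auto
    then have emp: "{x. emeasure (\<xi> \<omega>) (cell \<tau> \<omega> x) < ennreal \<alpha> * emeasure (\<eta> \<omega>) {x}} \<inter> atoms \<eta> \<omega> = {}"
      unfolding eta_star_def emeasure_count_space_eq_0 by simp
    show "Bal \<omega>" unfolding Bal_def
    proof
      fix y assume y: "y \<in> atoms \<eta> \<omega>"
      then have "\<not> emeasure (\<xi> \<omega>) (cell \<tau> \<omega> y) < ennreal \<alpha> * emeasure (\<eta> \<omega>) {y}" using emp by auto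
      with cell_le[OF g y] show "emeasure (\<xi> \<omega>) (cell \<tau> \<omega> y) = ennreal \<alpha> * emeasure (\<eta> \<omega>) {y}" by simp
    qed
  qed
qed

end

context mainI begin

definition Sp where "Sp \<omega> = emeasure (\<xi> \<omega>) {x. \<exists>y\<in>Qc. \<tau> \<omega> x = Some y}"

lemma Sp_meas: "(\<lambda>\<omega>. indicator xi.G0 \<omega> * Sp \<omega>) \<in> borel_measurable M"
  unfolding Sp_def by (rule xi_meas[OF tgt_sets[OF Qc_borel]]) (simp add: space_pair_measure)

lemma Sp_sum: "goodE \<omega> \<Longrightarrow> Sp \<omega> = (\<Sum>y\<in>Qc \<inter> atoms \<eta> \<omega>. emeasure (\<xi> \<omega>) (cell \<tau> \<omega> y))"
  unfolding Sp_def by (rule tgt_sum[OF _ Qc_borel Qc_bounded])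

lemma etaQ_sum: "goodE \<omega> \<Longrightarrow> ennreal \<alpha> * emeasure (\<eta> \<omega>) Qc = (\<Sum>y\<in>Qc \<inter> atoms \<eta> \<omega>. ennreal \<alpha> * emeasure (\<eta> \<omega>) {y})"
  by (simp add: eta_sum[OF _ Qc_borel Qc_bounded] sum_distrib_left)

lemma Sp_le: "goodE \<omega> \<Longrightarrow> Sp \<omega> \<le> ennreal \<alpha> * emeasure (\<eta> \<omega>) Qc"
  unfolding Sp_sum etaQ_sum by (rule sum_mono) (simp add: cell_le)

lemma Sp_Bal: "goodE \<omega> \<Longrightarrow> Bal \<omega> \<Longrightarrow> Sp \<omega> = ennreal \<alpha> * emeasure (\<eta> \<omega>) Qc"
  unfolding Sp_sum etaQ_sum Bal_def by (rule sum.cong) auto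

lemma E_Sp: "(\<integral>\<^sup>+\<omega>. emeasure (\<xi> \<omega>) {x \<in> Qc. \<tau> \<omega> x \<noteq> None} \<partial>M) = (\<integral>\<^sup>+\<omega>. Sp \<omega> \<partial>M)"
  unfolding Sp_def by (rule MTP)

lemma case0:
  assumes m0: "measure M Aset = 0"
  shows "AE \<omega> in M. P0 \<omega>"
proof -
  interpret P: prob_space M by (rule prob)
  have "Aset \<in> null_sets M" using m0 Aset_sets by (simp add: null_sets_def P.emeasure_eq_measure)
  then have "AE \<omega> in M. \<omega> \<notin> Aset" by (rule AE_not_in)
  then have NS0: "AE \<omega> in M. emeasure (\<xi> \<omega>) {x. \<tau> \<omega> x = None} = 0" using xi.AE_G0
    by eventually_elim (auto simp: Aset_def Phi_def xi.G0_def)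
  have c: "AE \<omega> in M. emeasure (\<xi> \<omega>) Qc = emeasure (\<xi> \<omega>) {x \<in> Qc. \<tau> \<omega> x \<noteq> None}"
    using NS0 AE_space
  proof eventually_elim
    case (elim \<omega>)
    then have \<omega>: "\<omega> \<in> space M" by simp
    have sets: "sets (\<xi> \<omega>) = sets borel" by (rule xi.sets_mu[OF \<omega>])
    have B1: "{x \<in> Qc. \<tau> \<omega> x \<noteq> None} \<in> sets borel"
    proof -
      have "{x \<in> Qc. \<tau> \<omega> x \<noteq> None} = Qc - {x. \<tau> \<omega> x = None}" by auto
      then show ?thesis using Qc_borel NS_borel[OF \<omega>] by (metis sets.Diff)
    qed
    have null: "{x. \<tau> \<omega> x = None} \<in> null_sets (\<xi> \<omega>)" using elim NS_borel[OF \<omega>] sets by (simp add: null_sets_def)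
    have "emeasure (\<xi> \<omega>) Qc \<le> emeasure (\<xi> \<omega>) ({x \<in> Qc. \<tau> \<omega> x \<noteq> None} \<union> {x. \<tau> \<omega> x = None})"
      by (rule emeasure_mono) (use B1 NS_borel[OF \<omega>] sets in auto)
    also have "\<dots> = emeasure (\<xi> \<omega>) {x \<in> Qc. \<tau> \<omega> x \<noteq> None}"
      by (rule emeasure_Un_null_set[OF _ null]) (use B1 sets in auto)
    finally have le: "emeasure (\<xi> \<omega>) Qc \<le> emeasure (\<xi> \<omega>) {x \<in> Qc. \<tau> \<omega> x \<noteq> None}" .
    have "emeasure (\<xi> \<omega>) {x \<in> Qc. \<tau> \<omega> x \<noteq> None} \<le> emeasure (\<xi> \<omega>) Qc"
      by (rule emeasure_mono) (use sets in auto)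
    with le show ?case by simp
  qed
  have EQx: "(\<integral>\<^sup>+\<omega>. Sp \<omega> \<partial>M) = intensity M \<xi>"
  proof -
    have "(\<integral>\<^sup>+\<omega>. Sp \<omega> \<partial>M) = (\<integral>\<^sup>+\<omega>. emeasure (\<xi> \<omega>) {x \<in> Qc. \<tau> \<omega> x \<noteq> None} \<partial>M)" by (rule E_Sp[symmetric])
    also have "\<dots> = (\<integral>\<^sup>+\<omega>. emeasure (\<xi> \<omega>) Qc \<partial>M)" by (rule nn_integral_cong_AE) (use c in auto)
    also have "\<dots> = intensity M \<xi>" unfolding intensity_def by (rule xi.E_Qc[OF finx])
    finally show ?thesis .
  qed
  have Ef: "(\<integral>\<^sup>+\<omega>. ennreal \<alpha> * emeasure (\<eta> \<omega>) Qc \<partial>M) = ennreal \<alpha> * intensity M \<eta>"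
    by (subst nn_integral_cmult) (auto simp: intensity_def eta.E_Qc[OF fine])
  have le: "AE \<omega> in M. indicator xi.G0 \<omega> * Sp \<omega> \<le> ennreal \<alpha> * emeasure (\<eta> \<omega>) Qc"
    using AE_goodE xi.AE_G0 by eventually_elim (simp add: Sp_le)
  have Eg: "(\<integral>\<^sup>+\<omega>. indicator xi.G0 \<omega> * Sp \<omega> \<partial>M) = intensity M \<xi>"
    unfolding EQx[symmetric] by (rule nn_integral_cong_AE[OF xi.AE_G0_eq])
  have "intensity M \<xi> \<le> ennreal \<alpha> * intensity M \<eta>"
    unfolding Eg[symmetric] Ef[symmetric] by (rule nn_integral_mono_AE[OF le])
  then have Ef2: "(\<integral>\<^sup>+\<omega>. ennreal \<alpha> * emeasure (\<eta> \<omega>) Qc \<partial>M) = intensity M \<xi>"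
    using alpha_le Ef by simp
  have fm: "(\<lambda>\<omega>. ennreal \<alpha> * emeasure (\<eta> \<omega>) Qc) \<in> borel_measurable M" by measurable
  note [measurable] = fm Sp_meas
  have "(\<integral>\<^sup>+\<omega>. ennreal \<alpha> * emeasure (\<eta> \<omega>) Qc - indicator xi.G0 \<omega> * Sp \<omega> \<partial>M) =
     (\<integral>\<^sup>+\<omega>. ennreal \<alpha> * emeasure (\<eta> \<omega>) Qc \<partial>M) - (\<integral>\<^sup>+\<omega>. indicator xi.G0 \<omega> * Sp \<omega> \<partial>M)"
    by (rule nn_integral_diff[OF fm Sp_meas _ le]) (use Eg ix in auto)
  also have "\<dots> = 0" using Ef2 Eg ix by simp
  finally have "AE \<omega> in M. ennreal \<alpha> * emeasure (\<eta> \<omega>) Qc - indicator xi.G0 \<omega> * Sp \<omega> = 0"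
    by (subst (asm) nn_integral_0_iff_AE) measurable
  then have eqAE: "AE \<omega> in M. Sp \<omega> = ennreal \<alpha> * emeasure (\<eta> \<omega>) Qc"
    using le xi.AE_G0 by eventually_elim (auto simp: diff_eq_0_iff_ennreal)
  show ?thesis using eqAE AE_goodE
  proof eventually_elim
    case (elim \<omega>)
    then have g: "goodE \<omega>" by simp
    have fin: "(\<Sum>y\<in>Qc \<inter> atoms \<eta> \<omega>. ennreal \<alpha> * emeasure (\<eta> \<omega>) {y}) < \<infinity>"
    proof -
      have "emeasure (\<eta> \<omega>) Qc < \<infinity>" using g Qc_bounded unfolding goodE_def by auto
      then show ?thesis unfolding etaQ_sum[OF g, symmetric] by (simp add: ennreal_mult_less_top)
    qed
    show "P0 \<omega>" unfolding P0_def
    proof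
      fix y assume y: "y \<in> Qc \<inter> atoms \<eta> \<omega>"
      show "emeasure (\<xi> \<omega>) (cell \<tau> \<omega> y) = ennreal \<alpha> * emeasure (\<eta> \<omega>) {y}"
      proof (rule sum_eq_le_ennreal[OF _ _ _ fin y])
        show "finite (Qc \<inter> atoms \<eta> \<omega>)" using g Qc_bounded unfolding goodE_def by auto
        show "\<And>y. y \<in> Qc \<inter> atoms \<eta> \<omega> \<Longrightarrow> emeasure (\<xi> \<omega>) (cell \<tau> \<omega> y) \<le> ennreal \<alpha> * emeasure (\<eta> \<omega>) {y}"
          using cell_le[OF g] by auto
        show "(\<Sum>y\<in>Qc \<inter> atoms \<eta> \<omega>. emeasure (\<xi> \<omega>) (cell \<tau> \<omega> y)) = (\<Sum>y\<in>Qc \<inter> atoms \<eta> \<omega>. ennreal \<alpha> * emeasure (\<eta> \<omega>) {y})"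
          using elim Sp_sum[OF g] etaQ_sum[OF g] by simp
      qed
    qed
  qed
qed

lemma AE_Bal: "AE \<omega> in M. Bal \<omega>"
  using Aset_01 case1 case0 P0_to_Bal by blast

end

context mainI begin

lemma balanced: "alpha_balanced M \<xi> \<eta> \<tau> \<alpha>"
  unfolding alpha_balanced_def using AE_goodE AE_Bal
proof eventually_elim
  case (elim \<omega>)
  then have g: "goodE \<omega>" and \<omega>: "\<omega> \<in> space M" by (auto simp: goodE_def)
  have sets: "sets (\<eta> \<omega>) = sets borel" by (rule eta.sets_mu[OF \<omega>])
  have "UNIV - atoms \<eta> \<omega> \<in> null_sets (\<eta> \<omega>)"
    using g atoms_borel[OF g] sets unfolding goodE_def by (auto simp: null_sets_def)
  moreover have "{x. emeasure (\<xi> \<omega>) (cell \<tau> \<omega> x) \<noteq> ennreal \<alpha> * emeasure (\<eta> \<omega>) {x}} \<subseteq> UNIV - atoms \<eta> \<omega>"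
    using elim unfolding Bal_def by auto
  ultimately show ?case unfolding null_in_def by blast
qed

lemma palm_eq: "intensity M \<xi> * palm M \<theta> \<xi> {\<omega> \<in> space M. \<tau> \<omega> 0 \<noteq> None} = ennreal \<alpha> * intensity M \<eta>"
proof -
  define A0 where "A0 = {\<omega> \<in> space M. \<tau> \<omega> 0 \<noteq> None}"
  define N0 where "N0 = (\<integral>\<^sup>+ \<omega>. (\<integral>\<^sup>+ x. indicator (cbox 0 One) x * indicator A0 (\<theta> x \<omega>) \<partial>(\<xi> \<omega>)) \<partial>M)"
  have "N0 = (\<integral>\<^sup>+ \<omega>. emeasure (\<xi> \<omega>) {x \<in> cbox 0 One. \<tau> \<omega> x \<noteq> None} \<partial>M)"
    unfolding N0_def
  proof (rule nn_integral_cong_AE)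
    show "AE \<omega> in M. (\<integral>\<^sup>+ x. indicator (cbox 0 One) x * indicator A0 (\<theta> x \<omega>) \<partial>(\<xi> \<omega>)) =
        emeasure (\<xi> \<omega>) {x \<in> cbox 0 One. \<tau> \<omega> x \<noteq> None}"
      using cov AE_space
    proof eventually_elim
      case (elim \<omega>)
      then have \<omega>: "\<omega> \<in> space M"
        and cv: "\<forall>x y. \<tau> (\<theta> y \<omega>) (x - y) = map_option (\<lambda>z. z - y) (\<tau> \<omega> x)" by auto
      have sets: "sets (\<xi> \<omega>) = sets borel" by (rule xi.sets_mu[OF \<omega>])
      have B: "{x \<in> cbox 0 One. \<tau> \<omega> x \<noteq> None} \<in> sets borel"
      proof -
        have "{x \<in> cbox 0 One. \<tau> \<omega> x \<noteq> None} = cbox 0 One - {x. \<tau> \<omega> x = None}" by auto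
        then show ?thesis using NS_borel[OF \<omega>] by (metis sets.Diff borel_compact compact_cbox)
      qed
      have "(\<integral>\<^sup>+ x. indicator (cbox 0 One) x * indicator A0 (\<theta> x \<omega>) \<partial>(\<xi> \<omega>)) =
          (\<integral>\<^sup>+ x. indicator {x \<in> cbox 0 One. \<tau> \<omega> x \<noteq> None} x \<partial>(\<xi> \<omega>))"
      proof (rule nn_integral_cong)
        fix x
        have "\<tau> (\<theta> x \<omega>) 0 = map_option (\<lambda>w. w - x) (\<tau> \<omega> (0 + x))" by (rule cov0[OF cv])
        then have "\<theta> x \<omega> \<in> A0 \<longleftrightarrow> \<tau> \<omega> x \<noteq> None"
          unfolding A0_def using theta_space[OF \<omega>] by auto
        then show "indicator (cbox 0 One) x * indicator A0 (\<theta> x \<omega>) = (indicator {x \<in> cbox 0 One. \<tau> \<omega> x \<noteq> None} x :: ennreal)"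
          by (auto simp: indicator_def)
      qed
      also have "\<dots> = emeasure (\<xi> \<omega>) {x \<in> cbox 0 One. \<tau> \<omega> x \<noteq> None}"
        by (rule nn_integral_indicator) (subst sets, rule B)
      finally show ?case .
    qed
  qed
  also have "\<dots> = (\<integral>\<^sup>+ \<omega>. emeasure (\<xi> \<omega>) {x \<in> Qc. \<tau> \<omega> x \<noteq> None} \<partial>M)"
  proof (rule nn_integral_cong_AE)
    show "AE \<omega> in M. emeasure (\<xi> \<omega>) {x \<in> cbox 0 One. \<tau> \<omega> x \<noteq> None} = emeasure (\<xi> \<omega>) {x \<in> Qc. \<tau> \<omega> x \<noteq> None}"
      using xi.cbox_Qc[OF finx] AE_space
    proof eventually_elim
      case (elim \<omega>)
      then have \<omega>: "\<omega> \<in> space M" by simp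
      have S: "UNIV - {x. \<tau> \<omega> x = None} \<in> sets borel" using NS_borel[OF \<omega>] by auto
      have "emeasure (\<xi> \<omega>) (cbox 0 One \<inter> (UNIV - {x. \<tau> \<omega> x = None})) = emeasure (\<xi> \<omega>) (Qc \<inter> (UNIV - {x. \<tau> \<omega> x = None}))"
        using elim S by blast
      moreover have "cbox 0 One \<inter> (UNIV - {x. \<tau> \<omega> x = None}) = {x \<in> cbox 0 One. \<tau> \<omega> x \<noteq> None}" by auto
      moreover have "Qc \<inter> (UNIV - {x. \<tau> \<omega> x = None}) = {x \<in> Qc. \<tau> \<omega> x \<noteq> None}" by auto
      ultimately show ?case by simp
    qed
  qed
  also have "\<dots> = (\<integral>\<^sup>+\<omega>. Sp \<omega> \<partial>M)" by (rule E_Sp)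
  also have "\<dots> = (\<integral>\<^sup>+\<omega>. ennreal \<alpha> * emeasure (\<eta> \<omega>) Qc \<partial>M)"
    by (rule nn_integral_cong_AE) (use AE_goodE AE_Bal in \<open>eventually_elim, simp add: Sp_Bal\<close>)
  also have "\<dots> = ennreal \<alpha> * intensity M \<eta>"
    by (subst nn_integral_cmult) (auto simp: intensity_def eta.E_Qc[OF fine])
  finally have N0: "N0 = ennreal \<alpha> * intensity M \<eta>" .
  have "palm M \<theta> \<xi> A0 = N0 / intensity M \<xi>" unfolding palm_def N0_def ..
  then have "intensity M \<xi> * palm M \<theta> \<xi> A0 = intensity M \<xi> * N0 / intensity M \<xi>"
    by (simp add: ennreal_times_divide)
  also have "\<dots> = N0 * intensity M \<xi> / intensity M \<xi>" by (simp only: mult.commute)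
  also have "\<dots> = N0" using ix0 ix by (intro ennreal_mult_divide_eq) auto
  finally have "intensity M \<xi> * palm M \<theta> \<xi> A0 = N0" .
  then show ?thesis using N0 unfolding A0_def by simp
qed

end

theorem proposition3p1:
  fixes M :: "'a measure"
    and \<theta> :: "'d::euclidean_space \<Rightarrow> 'a \<Rightarrow> 'a"
    and \<xi> \<eta> :: "'a \<Rightarrow> 'd measure"
    and \<tau> :: "'a \<Rightarrow> 'd \<Rightarrow> 'd option"
    and \<alpha> :: real
  assumes "prob_space M"
    and "measurable_flow M \<theta>"
    and "stationary_flow M \<theta>"
    and "ergodic_flow M \<theta>"
    and "random_measure M \<xi>" and "stationary_rm M \<theta> \<xi>"
    and "random_measure M \<eta>" and "stationary_rm M \<theta> \<eta>"
    and "discrete_locally_finite M \<eta>"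
    and "0 < intensity M \<xi>" and "intensity M \<xi> < \<infinity>"
    and "0 < intensity M \<eta>" and "intensity M \<eta> < \<infinity>"
    and "0 < intensity_star M \<eta>" and "intensity_star M \<eta> < \<infinity>"
    and "0 < \<alpha>" and "ennreal \<alpha> \<le> intensity M \<xi> / intensity M \<eta>"
    and "allocation M \<theta> \<tau>"
    and "appetite M \<xi> \<eta> \<tau> \<alpha>"
  shows "alpha_balanced M \<xi> \<eta> \<tau> \<alpha> \<and>
         intensity M \<xi> * palm M \<theta> \<xi> {\<omega> \<in> space M. \<tau> \<omega> 0 \<noteq> None}
           = ennreal \<alpha> * intensity M \<eta>"
proof -
  have "mainI M \<theta> \<xi> \<eta> \<tau> \<alpha>"
    by (intro mainI.intro mainS.intro flowS.intro mainS_axioms.intro mainI_axioms.intro) (fact assms)+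
  then interpret mainI M \<theta> \<xi> \<eta> \<tau> \<alpha> .
  show ?thesis using balanced palm_eq by simp
qed

end
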